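(* Consider an instance of SPSC (defined in the context) and let $\{x_{ij}\},\{y_k\}$ be an optimal solution of the linear program (LP) defined in the context. Then the service placement $X^{\psi}$ output by algorithm SA2 (described in the context) has total reward at least $(1-e^{-1})R/4$, where $R$ is the maximum total reward of a feasible service placement.
   Context: An instance of the service placement with set constraints (SPSC) problem consists of finite sets $S$ (services), $V$ (nodes), $U$ (users); a size $s_i>0$ for each $i\in S$; a capacity $c_j>0$ for each $j\in V$; and for each user $k\in U$ a required service $i_k\in S$, a set $T_k\subseteq V$ and a reward $w_k>0$. A service placement is a family $X=\{X_i:i\in S\}$, $X_i\subseteq V$; it is feasible iff $\sum_{i}s_i\mathbf 1[j\in X_i]\le c_j$ for all $j$; its total reward is $\sum_kw_k\mathbf 1[T_k\cap X_{i_k}\ne\emptyset]$; $R$ is the maximum total reward over feasible placements. The LP has nonnegative real variables $x_{ij},y_k$: maximize $\sum_ky_kw_k$ s.t. $y_k\le\sum_{j\in T_k}x_{i_kj}$, $y_k\le1$ for all $k$; $\sum_ix_{ij}s_i\le c_j$ for all $j$; $x_{ij}=0$ if $s_i>c_j$; $0\le x_{ij}\le1$. Let $\beta:=1/4,\gamma:=1/2,\delta:=1/4$, $\mathbb N=\{1,2,\dots\}$. For $j\in V$: $P_j^\oplus:=\{i:c_j/2<s_i\le c_j\}$, $P_j^\ominus:=\{i:c_j/4<s_i\le c_j/2\}$, $P_j^q:=\{i:\gamma^qc_j\beta<s_i\le\gamma^{q-1}c_j\beta\}$ for $q\in\mathbb N$; $d_j^q:=\sum_{i\in P_j^q}x_{ij}$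 for $q\in\mathbb N\cup\{\oplus,\ominus\}$; $v_j:=\delta c_j/\sum_{i:s_i\le c_j\beta}s_ix_{ij}$; $n_j^q:=\lceil v_jd_j^q\rceil$ ($q\in\mathbb N$); $h_j:=d_j^\ominus$ if $d_j^\ominus<2$, else $h_j:=d_j^\ominus/2$. A construction map is $\zeta:V\to\{1,2,3\}$; its slot set $\Lambda(\zeta)$ (each slot $\sigma$ has a node $\nu(\sigma)$ and class $\kappa(\sigma)\in\mathbb N\cup\{\oplus,\ominus\}$) contains, for each $j$: one slot of class $\oplus$ if $\zeta(j)=1$; two slots of class $\ominus$ if $\zeta(j)=2$; for each $q\in\mathbb N$, $n_j^q$ slots of class $q$ if $\zeta(j)=3$; no other slots on $j$. A slot allocation of $\Lambda$ is $\tau:\Lambda\to S$ with $\tau(\sigma)\in P^{\kappa(\sigma)}_{\nu(\sigma)}$; $X^\tau_i:=\{j:\exists\sigma,\nu(\sigma)=j,\tau(\sigma)=i\}$; $f_\tau(k):=\mathbf 1[T_k\cap X^\tau_{i_k}\ne\emptyset]$. Random experiment: draw $\zeta$ with $\zeta(j)$ independent over $j$, equal to $1,2,3$ with probabilities $\delta d_j^\oplus$, $\delta h_j$, $1-\delta d_j^\oplus-\delta h_j$; then, given $\zeta$, each slot $\sigma\in\Lambda(\zeta)$ independently gets $\tau(\sigma)=i$ with probability $x_{i\nu(\sigma)}/d^{\kappa(\sigma)}_{\nu(\sigma)}$ for $i\in P^{\kappa(\sigma)}_{\nu(\sigma)}$. A partial construction map is $\zeta':V\to\{1,2,3,\emptyset\}$;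 $M(\zeta')$ is the set of construction maps agreeing with $\zeta'$ where $\zeta'\ne\emptyset$; $E'(\zeta'):=\mathbb E[\sum_kf_\tau(k)w_k\mid\zeta\in M(\zeta')]$. Algorithm SA2: (i) labelling: start with all nodes unlabelled; process nodes one at a time; for current node $j$ and $a\in\{1,2,3\}$ let $\zeta'_a$ be $\zeta'$ with $j$ labelled $a$, choose $a'$ maximizing $E'(\zeta'_a)$ and set $\zeta'(j):=a'$; let $\lambda$ be the final construction map and $\Lambda:=\Lambda(\lambda)$. (ii) slot filling: with partial slot allocations $\tau':\Lambda\to S\cup\{\emptyset\}$ ($\tau'(\sigma)\in P^{\kappa(\sigma)}_{\nu(\sigma)}\cup\{\emptyset\}$), $A(\tau')$ the slot allocations extending $\tau'$, and $E(\tau'):=\mathbb E[\sum_kf_\tau(k)w_k\mid\zeta=\lambda,\tau\in A(\tau')]$: start with all slots empty, process slots one at a time, assigning to the current slot $\sigma$ the $i\in P^{\kappa(\sigma)}_{\nu(\sigma)}$ maximizing $E$ of the resulting partial slot allocation; with $\psi$ the final slot allocation, output $X^\psi$. *)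

theory Defs
  imports Complex_Main "HOL-Library.FuncSet"
begin

text \<open>An instance: services S, nodes V, users U (finite sets), sizes s, capacities c,
  required service req k (= i_k), sets T k, rewards w.\<close>

definition beta :: real where "beta = 1/4"
definition gamma :: real where "gamma = 1/2"
definition delta :: real where "delta = 1/4"

definition placement :: "'i set \<Rightarrow> 'j set \<Rightarrow> ('i \<Rightarrow> 'j set) \<Rightarrow> bool" where
  "placement S V X \<longleftrightarrow> (\<forall>i\<in>S. X i \<subseteq> V) \<and> (\<forall>i. i \<notin> S \<longrightarrow> X i = {})"

definition feasible_placement ::
  "'i set \<Rightarrow> 'j set \<Rightarrow> ('i \<Rightarrow> real) \<Rightarrow> ('j \<Rightarrow> real) \<Rightarrow> ('i \<Rightarrow> 'j set) \<Rightarrow> bool" where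
  "feasible_placement S V s c X \<longleftrightarrow> placement S V X \<and>
     (\<forall>j\<in>V. (\<Sum>i\<in>S. s i * (if j \<in> X i then 1 else 0)) \<le> c j)"

definition total_reward ::
  "'k set \<Rightarrow> ('k \<Rightarrow> 'i) \<Rightarrow> ('k \<Rightarrow> 'j set) \<Rightarrow> ('k \<Rightarrow> real) \<Rightarrow> ('i \<Rightarrow> 'j set) \<Rightarrow> real" where
  "total_reward U req T w X = (\<Sum>k\<in>U. w k * (if T k \<inter> X (req k) \<noteq> {} then 1 else 0))"

definition opt_reward ::
  "'i set \<Rightarrow> 'j set \<Rightarrow> 'k set \<Rightarrow> ('i \<Rightarrow> real) \<Rightarrow> ('j \<Rightarrow> real) \<Rightarrow>
   ('k \<Rightarrow> 'i) \<Rightarrow> ('k \<Rightarrow> 'j set) \<Rightarrow> ('k \<Rightarrow> real) \<Rightarrow> real" where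
  "opt_reward S V U s c req T w =
     Max (total_reward U req T w ` {X. feasible_placement S V s c X})"

definition lp_feasible ::
  "'i set \<Rightarrow> 'j set \<Rightarrow> 'k set \<Rightarrow> ('i \<Rightarrow> real) \<Rightarrow> ('j \<Rightarrow> real) \<Rightarrow>
   ('k \<Rightarrow> 'i) \<Rightarrow> ('k \<Rightarrow> 'j set) \<Rightarrow> ('i \<Rightarrow> 'j \<Rightarrow> real) \<Rightarrow> ('k \<Rightarrow> real) \<Rightarrow> bool" where
  "lp_feasible S V U s c req T x y \<longleftrightarrow>
     (\<forall>k\<in>U. 0 \<le> y k \<and> y k \<le> (\<Sum>j\<in>T k. x (req k) j) \<and> y k \<le> 1) \<and>
     (\<forall>j\<in>V. (\<Sum>i\<in>S. x i j * s i) \<le> c j) \<and>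
     (\<forall>i\<in>S. \<forall>j\<in>V. 0 \<le> x i j \<and> x i j \<le> 1 \<and> (s i > c j \<longrightarrow> x i j = 0))"

definition lp_optimal ::
  "'i set \<Rightarrow> 'j set \<Rightarrow> 'k set \<Rightarrow> ('i \<Rightarrow> real) \<Rightarrow> ('j \<Rightarrow> real) \<Rightarrow>
   ('k \<Rightarrow> 'i) \<Rightarrow> ('k \<Rightarrow> 'j set) \<Rightarrow> ('k \<Rightarrow> real) \<Rightarrow> ('i \<Rightarrow> 'j \<Rightarrow> real) \<Rightarrow> ('k \<Rightarrow> real) \<Rightarrow> bool" where
  "lp_optimal S V U s c req T w x y \<longleftrightarrow> lp_feasible S V U s c req T x y \<and>
     (\<forall>x' y'. lp_feasible S V U s c req T x' y' \<longrightarrow>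
        (\<Sum>k\<in>U. y' k * w k) \<le> (\<Sum>k\<in>U. y k * w k))"

text \<open>Size classes: Plus = \<oplus>, Minus = \<ominus>, Lvl q = q \<in> \<nat> (only q \<ge> 1 is used).\<close>

datatype cls = Plus | Minus | Lvl nat

definition Pcls :: "'i set \<Rightarrow> ('i \<Rightarrow> real) \<Rightarrow> ('j \<Rightarrow> real) \<Rightarrow> 'j \<Rightarrow> cls \<Rightarrow> 'i set" where
  "Pcls S s c j q = (case q of
      Plus \<Rightarrow> {i\<in>S. c j / 2 < s i \<and> s i \<le> c j}
    | Minus \<Rightarrow> {i\<in>S. c j / 4 < s i \<and> s i \<le> c j / 2}
    | Lvl n \<Rightarrow> {i\<in>S. gamma ^ n * c j * beta < s i \<and> s i \<le> gamma ^ (n - 1) * c j * beta})"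

definition dcls :: "'i set \<Rightarrow> ('i \<Rightarrow> real) \<Rightarrow> ('j \<Rightarrow> real) \<Rightarrow> ('i \<Rightarrow> 'j \<Rightarrow> real) \<Rightarrow> 'j \<Rightarrow> cls \<Rightarrow> real" where
  "dcls S s c x j q = (\<Sum>i\<in>Pcls S s c j q. x i j)"

definition vnode :: "'i set \<Rightarrow> ('i \<Rightarrow> real) \<Rightarrow> ('j \<Rightarrow> real) \<Rightarrow> ('i \<Rightarrow> 'j \<Rightarrow> real) \<Rightarrow> 'j \<Rightarrow> real" where
  "vnode S s c x j = delta * c j / (\<Sum>i\<in>{i\<in>S. s i \<le> c j * beta}. s i * x i j)"

definition ncnt :: "'i set \<Rightarrow> ('i \<Rightarrow> real) \<Rightarrow> ('j \<Rightarrow> real) \<Rightarrow> ('i \<Rightarrow> 'j \<Rightarrow> real) \<Rightarrow> 'j \<Rightarrow> nat \<Rightarrow> nat" where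
  "ncnt S s c x j q = nat \<lceil>vnode S s c x j * dcls S s c x j (Lvl q)\<rceil>"

definition hnode :: "'i set \<Rightarrow> ('i \<Rightarrow> real) \<Rightarrow> ('j \<Rightarrow> real) \<Rightarrow> ('i \<Rightarrow> 'j \<Rightarrow> real) \<Rightarrow> 'j \<Rightarrow> real" where
  "hnode S s c x j = (if dcls S s c x j Minus < 2 then dcls S s c x j Minus else dcls S s c x j Minus / 2)"

text \<open>Probability that node j gets label a in the random experiment.\<close>

definition plab :: "'i set \<Rightarrow> ('i \<Rightarrow> real) \<Rightarrow> ('j \<Rightarrow> real) \<Rightarrow> ('i \<Rightarrow> 'j \<Rightarrow> real) \<Rightarrow> 'j \<Rightarrow> nat \<Rightarrow> real" where
  "plab S s c x j a =
     (if a = 1 then delta * dcls S s c x j Plus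
      else if a = 2 then delta * hnode S s c x j
      else if a = 3 then 1 - delta * dcls S s c x j Plus - delta * hnode S s c x j
      else 0)"

text \<open>Slots: (node, class, index). A construction map is \<zeta> :: 'j \<Rightarrow> nat with values in {1,2,3}.\<close>

type_synonym 'j slot = "'j \<times> cls \<times> nat"

definition slots :: "'i set \<Rightarrow> 'j set \<Rightarrow> ('i \<Rightarrow> real) \<Rightarrow> ('j \<Rightarrow> real) \<Rightarrow> ('i \<Rightarrow> 'j \<Rightarrow> real) \<Rightarrow>
    ('j \<Rightarrow> nat) \<Rightarrow> 'j slot set" where
  "slots S V s c x \<zeta> =
     {(j, Plus, 0) | j. j \<in> V \<and> \<zeta> j = 1} \<union>
     {(j, Minus, m) | j m. j \<in> V \<and> \<zeta> j = 2 \<and> m < 2} \<union>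
     {(j, Lvl q, m) | j q m. j \<in> V \<and> \<zeta> j = 3 \<and> 1 \<le> q \<and> m < ncnt S s c x j q}"

definition slot_range :: "'i set \<Rightarrow> ('i \<Rightarrow> real) \<Rightarrow> ('j \<Rightarrow> real) \<Rightarrow> 'j slot \<Rightarrow> 'i set" where
  "slot_range S s c \<sigma> = Pcls S s c (fst \<sigma>) (fst (snd \<sigma>))"

definition Xtau :: "'j slot set \<Rightarrow> ('j slot \<Rightarrow> 'i) \<Rightarrow> 'i \<Rightarrow> 'j set" where
  "Xtau L \<tau> i = {j. \<exists>\<sigma>\<in>L. fst \<sigma> = j \<and> \<tau> \<sigma> = i}"

text \<open>E(\<tau>'): expected reward given \<zeta> = lam and \<tau> extending the partial allocation \<tau>'
  (unfilled slots independently drawn with probability x_{i,\<nu>(\<sigma>)} / d^{\<kappa>(\<sigma>)}_{\<nu>(\<sigma>)}).\<close>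

definition Eslot :: "'i set \<Rightarrow> 'j set \<Rightarrow> 'k set \<Rightarrow> ('i \<Rightarrow> real) \<Rightarrow> ('j \<Rightarrow> real) \<Rightarrow>
   ('k \<Rightarrow> 'i) \<Rightarrow> ('k \<Rightarrow> 'j set) \<Rightarrow> ('k \<Rightarrow> real) \<Rightarrow> ('i \<Rightarrow> 'j \<Rightarrow> real) \<Rightarrow>
   ('j \<Rightarrow> nat) \<Rightarrow> ('j slot \<Rightarrow> 'i option) \<Rightarrow> real" where
  "Eslot S V U s c req T w x lam \<tau>' =
    (let L = slots S V s c x lam in
     \<Sum>\<tau>\<in>{\<tau> \<in> PiE L (slot_range S s c). \<forall>\<sigma>\<in>L. \<tau>' \<sigma> \<noteq> None \<longrightarrow> \<tau> \<sigma> = the (\<tau>' \<sigma>)}.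
        (\<Prod>\<sigma>\<in>{\<sigma>\<in>L. \<tau>' \<sigma> = None}. x (\<tau> \<sigma>) (fst \<sigma>) / dcls S s c x (fst \<sigma>) (fst (snd \<sigma>)))
        * total_reward U req T w (Xtau L \<tau>))"

text \<open>E'(\<zeta>'): expected reward given \<zeta> agrees with the partial construction map \<zeta>'
  (None = unlabelled; unlabelled nodes independently drawn with probabilities plab).\<close>

definition Econs :: "'i set \<Rightarrow> 'j set \<Rightarrow> 'k set \<Rightarrow> ('i \<Rightarrow> real) \<Rightarrow> ('j \<Rightarrow> real) \<Rightarrow>
   ('k \<Rightarrow> 'i) \<Rightarrow> ('k \<Rightarrow> 'j set) \<Rightarrow> ('k \<Rightarrow> real) \<Rightarrow> ('i \<Rightarrow> 'j \<Rightarrow> real) \<Rightarrow>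
   ('j \<Rightarrow> nat option) \<Rightarrow> real" where
  "Econs S V U s c req T w x \<zeta>' =
    (\<Sum>\<zeta>\<in>PiE V (\<lambda>j. case \<zeta>' j of None \<Rightarrow> {1, 2, 3} | Some a \<Rightarrow> {a}).
       (\<Prod>j\<in>{j\<in>V. \<zeta>' j = None}. plab S s c x j (\<zeta> j))
       * Eslot S V U s c req T w x \<zeta> (\<lambda>_. None))"

text \<open>A run of SA2: nodes processed in order js, final labels lam; slots processed in
  order sl, final allocation psi; each step takes a maximiser (arbitrary tie-breaking).\<close>

definition sa2_run :: "'i set \<Rightarrow> 'j set \<Rightarrow> 'k set \<Rightarrow> ('i \<Rightarrow> real) \<Rightarrow> ('j \<Rightarrow> real) \<Rightarrow>
   ('k \<Rightarrow> 'i) \<Rightarrow> ('k \<Rightarrow> 'j set) \<Rightarrow> ('k \<Rightarrow> real) \<Rightarrow> ('i \<Rightarrow> 'j \<Rightarrow> real) \<Rightarrow>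
   'j list \<Rightarrow> ('j \<Rightarrow> nat) \<Rightarrow> 'j slot list \<Rightarrow> ('j slot \<Rightarrow> 'i) \<Rightarrow> bool" where
  "sa2_run S V U s c req T w x js lam sl psi \<longleftrightarrow>
    (let lpref = (\<lambda>t j. if j \<in> set (take t js) then Some (lam j) else None);
         L = slots S V s c x lam;
         spref = (\<lambda>t \<sigma>. if \<sigma> \<in> set (take t sl) then Some (psi \<sigma>) else None) in
     distinct js \<and> set js = V \<and> (\<forall>j\<in>V. lam j \<in> {1, 2, 3}) \<and>
     (\<forall>t < length js. \<forall>b \<in> {1, 2, 3}.
        Econs S V U s c req T w x ((lpref t)(js ! t := Some b))
          \<le> Econs S V U s c req T w x (lpref (Suc t))) \<and>
     distinct sl \<and> set sl = L \<and> (\<forall>\<sigma>\<in>L. psi \<sigma> \<in> slot_range S s c \<sigma>) \<and>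
     (\<forall>t < length sl. \<forall>i \<in> slot_range S s c (sl ! t).
        Eslot S V U s c req T w x lam ((spref t)(sl ! t := Some i))
          \<le> Eslot S V U s c req T w x lam (spref (Suc t))))"

definition sa2_output :: "'i set \<Rightarrow> 'j set \<Rightarrow> ('i \<Rightarrow> real) \<Rightarrow> ('j \<Rightarrow> real) \<Rightarrow> ('i \<Rightarrow> 'j \<Rightarrow> real) \<Rightarrow>
   ('j \<Rightarrow> nat) \<Rightarrow> ('j slot \<Rightarrow> 'i) \<Rightarrow> 'i \<Rightarrow> 'j set" where
  "sa2_output S V s c x lam psi = Xtau (slots S V s c x lam) psi"

end

theory Submission
  imports Defs
begin

definition ES :: "'a set \<Rightarrow> ('a \<Rightarrow> 'b set) \<Rightarrow> ('a \<Rightarrow> 'b \<Rightarrow> real) \<Rightarrow> (('a \<Rightarrow> 'b) \<Rightarrow> real) \<Rightarrow> ('a \<Rightarrow> 'b option) \<Rightarrow> real" where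
  "ES L R p F \<tau>' = (\<Sum>\<tau>\<in>{\<tau> \<in> PiE L R. \<forall>\<sigma>\<in>L. \<tau>' \<sigma> \<noteq> None \<longrightarrow> \<tau> \<sigma> = the (\<tau>' \<sigma>)}.
        (\<Prod>\<sigma>\<in>{\<sigma>\<in>L. \<tau>' \<sigma> = None}. p \<sigma> (\<tau> \<sigma>)) * F \<tau>)"

lemma ES_decomp:
  assumes fL: "finite L" and fR: "\<And>\<sigma>. \<sigma> \<in> L \<Longrightarrow> finite (R \<sigma>)"
    and s0: "\<sigma>0 \<in> L" and n0: "\<tau>' \<sigma>0 = None"
  shows "ES L R p F \<tau>' = (\<Sum>i\<in>R \<sigma>0. p \<sigma>0 i * ES L R p F (\<tau>'(\<sigma>0 := Some i)))"
proof -
  define A where "A = {\<tau> \<in> PiE L R. \<forall>\<sigma>\<in>L. \<tau>' \<sigma> \<noteq> None \<longrightarrow> \<tau> \<sigma> = the (\<tau>' \<sigma>)}"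
  define N where "N = {\<sigma>\<in>L. \<tau>' \<sigma> = None}"
  define g where "g = (\<lambda>\<tau>. (\<Prod>\<sigma>\<in>N. p \<sigma> (\<tau> \<sigma>)) * F \<tau>)"
  have fA: "finite A" by (rule finite_subset[of A "PiE L R"]) (auto simp: A_def intro: finite_PiE fL fR)
  have img: "(\<lambda>\<tau>. \<tau> \<sigma>0) ` A \<subseteq> R \<sigma>0" using s0 unfolding A_def by (auto simp: PiE_iff)
  have "ES L R p F \<tau>' = sum g A" unfolding ES_def A_def N_def g_def by simp
  also have "\<dots> = (\<Sum>i\<in>R \<sigma>0. sum g {\<tau>. \<tau> \<in> A \<and> \<tau> \<sigma>0 = i})"
    using sum.group[OF fA fR[OF s0] img, of g] by simp
  also have "\<dots> = (\<Sum>i\<in>R \<sigma>0. p \<sigma>0 i * ES L R p F (\<tau>'(\<sigma>0 := Some i)))"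
  proof (rule sum.cong[OF refl])
    fix i assume i: "i \<in> R \<sigma>0"
    have setq: "{\<tau>. \<tau> \<in> A \<and> \<tau> \<sigma>0 = i} = {\<tau> \<in> PiE L R. \<forall>\<sigma>\<in>L. (\<tau>'(\<sigma>0 := Some i)) \<sigma> \<noteq> None \<longrightarrow> \<tau> \<sigma> = the ((\<tau>'(\<sigma>0 := Some i)) \<sigma>)}"
      unfolding A_def using s0 n0 by auto
    have Nq: "{\<sigma>\<in>L. (\<tau>'(\<sigma>0 := Some i)) \<sigma> = None} = N - {\<sigma>0}" unfolding N_def by auto
    have s0N: "\<sigma>0 \<in> N" unfolding N_def using s0 n0 by auto
    have fN: "finite N" unfolding N_def using fL by auto
    show "sum g {\<tau>. \<tau> \<in> A \<and> \<tau> \<sigma>0 = i} = p \<sigma>0 i * ES L R p F (\<tau>'(\<sigma>0 := Some i))"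
      unfolding ES_def setq[symmetric] Nq sum_distrib_left
    proof (rule sum.cong[OF refl])
      fix \<tau> assume "\<tau> \<in> {\<tau>. \<tau> \<in> A \<and> \<tau> \<sigma>0 = i}"
      then have "\<tau> \<sigma>0 = i" by simp
      then show "g \<tau> = p \<sigma>0 i * ((\<Prod>\<sigma>\<in>N - {\<sigma>0}. p \<sigma> (\<tau> \<sigma>)) * F \<tau>)"
        unfolding g_def using prod.remove[OF fN s0N, of "\<lambda>\<sigma>. p \<sigma> (\<tau> \<sigma>)"] by simp
    qed
  qed
  finally show ?thesis .
qed

lemma ES_nonneg:
  assumes "\<And>\<sigma> r. \<sigma> \<in> L \<Longrightarrow> r \<in> R \<sigma> \<Longrightarrow> p \<sigma> r \<ge> 0" and "\<And>\<tau>. F \<tau> \<ge> 0"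
  shows "ES L R p F \<tau>' \<ge> 0"
  unfolding ES_def
  by (intro sum_nonneg mult_nonneg_nonneg prod_nonneg assms) (auto simp: PiE_iff)

lemma ES_step:
  assumes fL: "finite L" and fR: "\<And>\<sigma>. \<sigma> \<in> L \<Longrightarrow> finite (R \<sigma>)"
    and s0: "\<sigma>0 \<in> L" and n0: "\<tau>' \<sigma>0 = None"
    and pnn: "\<And>\<sigma> r. \<sigma> \<in> L \<Longrightarrow> r \<in> R \<sigma> \<Longrightarrow> p \<sigma> r \<ge> 0"
    and psum: "(\<Sum>i\<in>R \<sigma>0. p \<sigma>0 i) = 1 \<or> (\<Sum>i\<in>R \<sigma>0. p \<sigma>0 i) = 0"
    and le: "\<And>i. i \<in> R \<sigma>0 \<Longrightarrow> ES L R p F (\<tau>'(\<sigma>0 := Some i)) \<le> M" and M: "0 \<le> M"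
  shows "ES L R p F \<tau>' \<le> M"
proof -
  have "ES L R p F \<tau>' = (\<Sum>i\<in>R \<sigma>0. p \<sigma>0 i * ES L R p F (\<tau>'(\<sigma>0 := Some i)))"
    by (rule ES_decomp) (use fL fR s0 n0 in auto)
  also have "\<dots> \<le> (\<Sum>i\<in>R \<sigma>0. p \<sigma>0 i * M)"
    by (intro sum_mono mult_left_mono le pnn[OF s0])
  also have "\<dots> = (\<Sum>i\<in>R \<sigma>0. p \<sigma>0 i) * M" by (simp add: sum_distrib_right)
  also have "\<dots> \<le> M" using psum M by auto
  finally show ?thesis .
qed

lemma distinct_nth_notin_take:
  assumes "distinct xs" "t < length xs" shows "xs ! t \<notin> set (take t xs)"
proof -
  have "xs = take t xs @ xs ! t # drop (Suc t) xs" using assms(2) by (simp add: id_take_nth_drop)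
  then show ?thesis using assms(1) by (metis distinct_append not_distinct_conv_prefix)
qed

lemma ES_chain:
  assumes fL: "finite L" and fR: "\<And>\<sigma>. \<sigma> \<in> L \<Longrightarrow> finite (R \<sigma>)"
    and pnn: "\<And>\<sigma> r. \<sigma> \<in> L \<Longrightarrow> r \<in> R \<sigma> \<Longrightarrow> p \<sigma> r \<ge> 0"
    and psum: "\<And>\<sigma>. \<sigma> \<in> L \<Longrightarrow> (\<Sum>i\<in>R \<sigma>. p \<sigma> i) = 1 \<or> (\<Sum>i\<in>R \<sigma>. p \<sigma> i) = 0"
    and Fnn: "\<And>\<tau>. F \<tau> \<ge> 0"
    and dist: "distinct sl" and setsl: "set sl = L"
    and pref: "pref = (\<lambda>t \<sigma>. if \<sigma> \<in> set (take t sl) then Some (psi \<sigma>) else None)"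
    and step: "\<forall>t < length sl. \<forall>i \<in> R (sl ! t). ES L R p F ((pref t)(sl ! t := Some i)) \<le> ES L R p F (pref (Suc t))"
  shows "ES L R p F (pref 0) \<le> ES L R p F (pref (length sl))"
proof -
  have "ES L R p F (pref 0) \<le> ES L R p F (pref t)" if "t \<le> length sl" for t
    using that
  proof (induction t)
    case 0 then show ?case by simp
  next
    case (Suc t)
    have tl: "t < length sl" using Suc by simp
    have "ES L R p F (pref t) \<le> ES L R p F (pref (Suc t))"
    proof (rule ES_step[OF fL fR])
      show "sl ! t \<in> L" using tl setsl by auto
      show "pref t (sl ! t) = None" using distinct_nth_notin_take[OF dist tl] pref by simp
      show "(\<Sum>i\<in>R (sl ! t). p (sl ! t) i) = 1 \<or> (\<Sum>i\<in>R (sl ! t). p (sl ! t) i) = 0"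
        using psum[of "sl ! t"] nth_mem[OF tl] setsl by blast
      show "0 \<le> ES L R p F (pref (Suc t))" by (rule ES_nonneg[OF pnn Fnn])
      show "\<And>i. i \<in> R (sl ! t) \<Longrightarrow> ES L R p F ((pref t)(sl ! t := Some i)) \<le> ES L R p F (pref (Suc t))"
        using step tl by auto
    qed (auto intro: pnn fR)
    then show ?case using Suc by simp
  qed
  then show ?thesis by simp
qed

lemma ES_full:
  assumes "\<And>\<sigma>. \<sigma> \<in> L \<Longrightarrow> psi \<sigma> \<in> R \<sigma>" and "\<And>\<sigma>. \<sigma> \<in> L \<Longrightarrow> \<tau>' \<sigma> = Some (psi \<sigma>)"
  shows "ES L R p F \<tau>' = F (restrict psi L)"
proof -
  have e1: "{\<tau> \<in> PiE L R. \<forall>\<sigma>\<in>L. \<tau>' \<sigma> \<noteq> None \<longrightarrow> \<tau> \<sigma> = the (\<tau>' \<sigma>)} = {restrict psi L}"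
    using assms by (auto simp: PiE_iff extensional_def)
  have e2: "{\<sigma>\<in>L. \<tau>' \<sigma> = None} = {}"
    using assms by auto
  show ?thesis unfolding ES_def e1 e2 by simp
qed

definition Kset :: "'i set \<Rightarrow> ('i \<Rightarrow> real) \<Rightarrow> ('j \<Rightarrow> real) \<Rightarrow> ('i \<Rightarrow> 'j \<Rightarrow> real) \<Rightarrow> 'j \<Rightarrow> nat \<Rightarrow> (cls \<times> nat) set" where
  "Kset S s c x j a = (if a = 1 then {(Plus, 0)} else if a = 2 then {(Minus, 0), (Minus, 1)}
     else if a = 3 then {(Lvl q, m) | q m. 1 \<le> q \<and> m < ncnt S s c x j q} else {})"

lemma slots_Sigma: "slots S V s c x \<zeta> = Sigma V (\<lambda>j. Kset S s c x j (\<zeta> j))"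
  unfolding slots_def Kset_def by (auto simp: less_2_cases_iff split: if_splits)

lemma Pcls_sub: "Pcls S s c j q \<subseteq> S"
  unfolding Pcls_def by (cases q) auto

locale spsc =
  fixes S :: "'i set" and V :: "'j set" and U :: "'k set"
    and s :: "'i \<Rightarrow> real" and c :: "'j \<Rightarrow> real"
    and req :: "'k \<Rightarrow> 'i" and T :: "'k \<Rightarrow> 'j set" and w :: "'k \<Rightarrow> real"
    and x :: "'i \<Rightarrow> 'j \<Rightarrow> real" and y :: "'k \<Rightarrow> real"
  assumes fS: "finite S" and fV: "finite V" and fU: "finite U"
    and spos: "\<forall>i\<in>S. s i > 0" and cpos: "\<forall>j\<in>V. c j > 0"
    and users: "\<forall>k\<in>U. req k \<in> S \<and> T k \<subseteq> V \<and> w k > 0"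
    and lpf: "lp_feasible S V U s c req T x y"

context spsc
begin

lemma xnn: "i \<in> S \<Longrightarrow> j \<in> V \<Longrightarrow> 0 \<le> x i j"
  using lpf unfolding lp_feasible_def by auto

lemma xle1: "i \<in> S \<Longrightarrow> j \<in> V \<Longrightarrow> x i j \<le> 1"
  using lpf unfolding lp_feasible_def by auto

lemma xbig: "i \<in> S \<Longrightarrow> j \<in> V \<Longrightarrow> s i > c j \<Longrightarrow> x i j = 0"
  using lpf unfolding lp_feasible_def by auto

lemma cap: "j \<in> V \<Longrightarrow> (\<Sum>i\<in>S. x i j * s i) \<le> c j"
  using lpf unfolding lp_feasible_def by auto

lemma fP: "finite (Pcls S s c j q)"
  using finite_subset[OF Pcls_sub fS] .

lemma d_nonneg: "j \<in> V \<Longrightarrow> 0 \<le> dcls S s c x j q"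
  unfolding dcls_def using Pcls_sub[of S s c j q] by (intro sum_nonneg xnn) auto

lemma x_le_d: "j \<in> V \<Longrightarrow> i \<in> Pcls S s c j q \<Longrightarrow> x i j \<le> dcls S s c x j q"
  unfolding dcls_def using Pcls_sub[of S s c j q]
  by (intro member_le_sum fP) (auto intro: xnn)

lemma Lvl_unique:
  assumes j: "j \<in> V" and "i \<in> Pcls S s c j (Lvl q)" and "i \<in> Pcls S s c j (Lvl q')"
  shows "q = q'"
proof (rule ccontr)
  assume ne: "q \<noteq> q'"
  have cj: "c j > 0" using cpos j by auto
  have key: "False" if a: "i \<in> Pcls S s c j (Lvl a)" and b: "i \<in> Pcls S s c j (Lvl b)" and ab: "a < b" for a b
  proof -
    have "gamma ^ (b - 1) \<le> gamma ^ a" using ab by (intro power_decreasing) (auto simp: gamma_def)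
    then have "gamma ^ (b - 1) * c j * beta \<le> gamma ^ a * c j * beta"
      using cj by (intro mult_right_mono) (auto simp: beta_def)
    then show False using a b unfolding Pcls_def by auto
  qed
  show False using ne key assms by (metis linorder_neqE_nat)
qed

lemma ncnt_nonempty: "ncnt S s c x j q \<noteq> 0 \<Longrightarrow> Pcls S s c j (Lvl q) \<noteq> {}"
  unfolding ncnt_def dcls_def by auto

lemma finite_Lvl_q: assumes j: "j \<in> V" shows "finite {q. ncnt S s c x j q \<noteq> 0}"
proof -
  have sub: "{q. ncnt S s c x j q \<noteq> 0} \<subseteq> (\<Union>i\<in>S. {q. i \<in> Pcls S s c j (Lvl q)})"
    using ncnt_nonempty Pcls_sub by fastforce
  have "finite {q. i \<in> Pcls S s c j (Lvl q)}" for i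
  proof (cases "\<exists>q. i \<in> Pcls S s c j (Lvl q)")
    case True
    then obtain q where "i \<in> Pcls S s c j (Lvl q)" by blast
    then have "{q. i \<in> Pcls S s c j (Lvl q)} \<subseteq> {q}" using Lvl_unique[OF j] by blast
    then show ?thesis using finite_subset by blast
  next
    case False then show ?thesis by simp
  qed
  then show ?thesis using sub fS by (meson finite_UN_I finite_subset)
qed

lemma finite_Kset: assumes j: "j \<in> V" shows "finite (Kset S s c x j a)"
proof -
  define Q where "Q = {q. ncnt S s c x j q \<noteq> 0}"
  define N where "N = Max (insert 0 (ncnt S s c x j ` Q))"
  have fQ: "finite Q" using finite_Lvl_q[OF j] Q_def by simp
  have "{(Lvl q, m) | q m. 1 \<le> q \<and> m < ncnt S s c x j q} \<subseteq> (Lvl ` Q) \<times> {..<N}"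
  proof
    fix z assume "z \<in> {(Lvl q, m) | q m. 1 \<le> q \<and> m < ncnt S s c x j q}"
    then obtain q m where z: "z = (Lvl q, m)" "m < ncnt S s c x j q" by blast
    then have "q \<in> Q" unfolding Q_def by auto
    then have "ncnt S s c x j q \<le> N" unfolding N_def using fQ by (intro Max_ge) auto
    then show "z \<in> (Lvl ` Q) \<times> {..<N}" using z \<open>q \<in> Q\<close> by auto
  qed
  then have "finite {(Lvl q, m) | q m. 1 \<le> q \<and> m < ncnt S s c x j q}"
    using fQ by (meson finite_SigmaI finite_imageI finite_lessThan finite_subset)
  then show ?thesis unfolding Kset_def by auto
qed

lemma finite_slots: "finite (slots S V s c x \<zeta>)"
  unfolding slots_Sigma using fV finite_Kset by (intro finite_SigmaI) auto

lemma slots_fst: "\<sigma> \<in> slots S V s c x \<zeta> \<Longrightarrow> fst \<sigma> \<in> V"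
  unfolding slots_Sigma by auto

lemma fR: "finite (slot_range S s c \<sigma>)"
  unfolding slot_range_def by (rule fP)

end

definition pslot :: "'i set \<Rightarrow> ('i \<Rightarrow> real) \<Rightarrow> ('j \<Rightarrow> real) \<Rightarrow> ('i \<Rightarrow> 'j \<Rightarrow> real) \<Rightarrow> 'j slot \<Rightarrow> 'i \<Rightarrow> real" where
  "pslot S s c x \<sigma> r = x r (fst \<sigma>) / dcls S s c x (fst \<sigma>) (fst (snd \<sigma>))"

definition ek :: "'i set \<Rightarrow> ('i \<Rightarrow> real) \<Rightarrow> ('j \<Rightarrow> real) \<Rightarrow> ('i \<Rightarrow> 'j \<Rightarrow> real) \<Rightarrow> ('k \<Rightarrow> 'i) \<Rightarrow> ('k \<Rightarrow> 'j set) \<Rightarrow> 'k \<Rightarrow> 'j slot \<Rightarrow> real" where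
  "ek S s c x req T k \<sigma> = (if fst \<sigma> \<in> T k \<and> req k \<in> slot_range S s c \<sigma> then pslot S s c x \<sigma> (req k) else 0)"

lemma Eslot_ES: "Eslot S V U s c req T w x lam \<tau>' = ES (slots S V s c x lam) (slot_range S s c) (pslot S s c x)
    (\<lambda>\<tau>. total_reward U req T w (Xtau (slots S V s c x lam) \<tau>)) \<tau>'"
  unfolding Eslot_def ES_def Let_def pslot_def by simp

lemma cover_ind:
  assumes "finite L"
  shows "(if T \<inter> Xtau L \<tau> i \<noteq> {} then 1 else 0) = 1 - (\<Prod>\<sigma>\<in>L. (if fst \<sigma> \<in> T \<and> \<tau> \<sigma> = i then 0 else (1::real)))"
proof (cases "\<exists>\<sigma>\<in>L. fst \<sigma> \<in> T \<and> \<tau> \<sigma> = i")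
  case True
  then have "(\<Prod>\<sigma>\<in>L. (if fst \<sigma> \<in> T \<and> \<tau> \<sigma> = i then 0 else (1::real))) = 0"
    using assms by (auto simp: prod_zero_iff)
  moreover have "T \<inter> Xtau L \<tau> i \<noteq> {}" using True unfolding Xtau_def by auto
  ultimately show ?thesis by simp
next
  case False
  then have "(\<Prod>\<sigma>\<in>L. (if fst \<sigma> \<in> T \<and> \<tau> \<sigma> = i then 0 else (1::real))) = 1"
    by (intro prod.neutral) auto
  moreover have "T \<inter> Xtau L \<tau> i = {}" using False unfolding Xtau_def by auto
  ultimately show ?thesis by simp
qed

lemma sum_if_eq: "finite R \<Longrightarrow> (\<Sum>r\<in>R. f r * (if r = i then 0 else (1::real))) = sum f R - (if i \<in> R then f i else 0)"
proof -
  assume fR: "finite R"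
  have "(\<Sum>r\<in>R. f r * (if r = i then 0 else (1::real))) = (\<Sum>r\<in>R. f r) - (\<Sum>r\<in>R. if r = i then f r else 0)"
    unfolding sum_subtractf[symmetric] by (rule sum.cong) auto
  also have "(\<Sum>r\<in>R. if r = i then f r else 0) = (if i \<in> R then f i else 0)"
    using fR by (simp add: sum.delta)
  finally show ?thesis .
qed

context spsc
begin

lemma psum: "(\<Sum>i\<in>slot_range S s c \<sigma>. pslot S s c x \<sigma> i) = 1 \<or> (\<Sum>i\<in>slot_range S s c \<sigma>. pslot S s c x \<sigma> i) = 0"
  unfolding pslot_def slot_range_def sum_divide_distrib[symmetric] dcls_def[symmetric] by auto

lemma psum1: "dcls S s c x (fst \<sigma>) (fst (snd \<sigma>)) \<noteq> 0 \<Longrightarrow> (\<Sum>i\<in>slot_range S s c \<sigma>. pslot S s c x \<sigma> i) = 1"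
  unfolding pslot_def slot_range_def sum_divide_distrib[symmetric] dcls_def[symmetric] by auto

lemma pslot_nonneg: "\<sigma> \<in> slots S V s c x \<zeta> \<Longrightarrow> r \<in> slot_range S s c \<sigma> \<Longrightarrow> 0 \<le> pslot S s c x \<sigma> r"
  unfolding pslot_def slot_range_def using slots_fst[of \<sigma> \<zeta>] Pcls_sub[of S s c "fst \<sigma>" "fst (snd \<sigma>)"]
  by (intro divide_nonneg_nonneg xnn d_nonneg) auto

lemma w_nonneg: "k \<in> U \<Longrightarrow> 0 \<le> w k" using users by force

lemma TR_nonneg: "0 \<le> total_reward U req T w X"
  unfolding total_reward_def using w_nonneg by (intro sum_nonneg) auto

lemma Eslot_formula:
  assumes dpos: "\<And>\<sigma>. \<sigma> \<in> slots S V s c x lam \<Longrightarrow> dcls S s c x (fst \<sigma>) (fst (snd \<sigma>)) \<noteq> 0"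
  shows "Eslot S V U s c req T w x lam (\<lambda>_. None) =
    (\<Sum>k\<in>U. w k * (1 - (\<Prod>\<sigma>\<in>slots S V s c x lam. 1 - ek S s c x req T k \<sigma>)))"
proof -
  define L where "L = slots S V s c x lam"
  define R where "R = slot_range S s c"
  define p where "p = pslot S s c x"
  define \<phi> where "\<phi> = (\<lambda>k (\<sigma>::'j slot) r. if fst \<sigma> \<in> T k \<and> r = req k then 0 else (1::real))"
  have fL: "finite L" unfolding L_def by (rule finite_slots)
  have fRR: "\<And>\<sigma>. finite (R \<sigma>)" unfolding R_def by (rule fR)
  have fPi: "finite (PiE L R)" using fL fRR by (intro finite_PiE) auto
  have "Eslot S V U s c req T w x lam (\<lambda>_. None) =
      (\<Sum>\<tau>\<in>PiE L R. (\<Prod>\<sigma>\<in>L. p \<sigma> (\<tau> \<sigma>)) * total_reward U req T w (Xtau L \<tau>))"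
    unfolding Eslot_ES ES_def L_def R_def p_def by simp
  also have "\<dots> = (\<Sum>\<tau>\<in>PiE L R. \<Sum>k\<in>U. w k * ((\<Prod>\<sigma>\<in>L. p \<sigma> (\<tau> \<sigma>)) - (\<Prod>\<sigma>\<in>L. p \<sigma> (\<tau> \<sigma>) * \<phi> k \<sigma> (\<tau> \<sigma>))))"
    unfolding total_reward_def cover_ind[OF fL] sum_distrib_left prod.distrib \<phi>_def
    by (intro sum.cong refl) (simp add: algebra_simps)
  also have "\<dots> = (\<Sum>k\<in>U. w k * ((\<Sum>\<tau>\<in>PiE L R. \<Prod>\<sigma>\<in>L. p \<sigma> (\<tau> \<sigma>)) - (\<Sum>\<tau>\<in>PiE L R. \<Prod>\<sigma>\<in>L. p \<sigma> (\<tau> \<sigma>) * \<phi> k \<sigma> (\<tau> \<sigma>))))"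
    by (subst sum.swap) (simp add: sum_distrib_left[symmetric] sum_subtractf)
  also have "\<dots> = (\<Sum>k\<in>U. w k * ((\<Prod>\<sigma>\<in>L. \<Sum>r\<in>R \<sigma>. p \<sigma> r) - (\<Prod>\<sigma>\<in>L. \<Sum>r\<in>R \<sigma>. p \<sigma> r * \<phi> k \<sigma> r)))"
    by (simp add: prod_sum_PiE[OF fL fRR])
  also have "\<dots> = (\<Sum>k\<in>U. w k * (1 - (\<Prod>\<sigma>\<in>L. 1 - ek S s c x req T k \<sigma>)))"
  proof (intro sum.cong refl arg_cong2[where f="(*)"] arg_cong2[where f="(-)"])
    have s1: "\<And>\<sigma>. \<sigma> \<in> L \<Longrightarrow> (\<Sum>r\<in>R \<sigma>. p \<sigma> r) = 1"
      unfolding R_def p_def L_def using psum1 dpos by blast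
    then show "(\<Prod>\<sigma>\<in>L. \<Sum>r\<in>R \<sigma>. p \<sigma> r) = 1" by simp
    fix k
    show "(\<Prod>\<sigma>\<in>L. \<Sum>r\<in>R \<sigma>. p \<sigma> r * \<phi> k \<sigma> r) = (\<Prod>\<sigma>\<in>L. 1 - ek S s c x req T k \<sigma>)"
    proof (rule prod.cong[OF refl])
      fix \<sigma> assume sL: "\<sigma> \<in> L"
      show "(\<Sum>r\<in>R \<sigma>. p \<sigma> r * \<phi> k \<sigma> r) = 1 - ek S s c x req T k \<sigma>"
      proof (cases "fst \<sigma> \<in> T k")
        case True
        then have "(\<Sum>r\<in>R \<sigma>. p \<sigma> r * \<phi> k \<sigma> r) = (\<Sum>r\<in>R \<sigma>. p \<sigma> r * (if r = req k then 0 else 1))"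
          unfolding \<phi>_def by simp
        also have "\<dots> = 1 - (if req k \<in> R \<sigma> then p \<sigma> (req k) else 0)"
          using sum_if_eq[OF fRR] s1[OF sL] by simp
        finally show ?thesis unfolding ek_def p_def R_def using True by simp
      next
        case False
        then show ?thesis unfolding \<phi>_def ek_def using s1[OF sL] by simp
      qed
    qed
  qed
  finally show ?thesis unfolding L_def .
qed

end

definition Gk :: "'i set \<Rightarrow> ('i \<Rightarrow> real) \<Rightarrow> ('j \<Rightarrow> real) \<Rightarrow> ('i \<Rightarrow> 'j \<Rightarrow> real) \<Rightarrow> ('k \<Rightarrow> 'i) \<Rightarrow> ('k \<Rightarrow> 'j set) \<Rightarrow> 'k \<Rightarrow> 'j \<Rightarrow> nat \<Rightarrow> real" where
  "Gk S s c x req T k j a = (\<Prod>r\<in>Kset S s c x j a. 1 - ek S s c x req T k (j, r))"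

context spsc
begin

lemma cap_split:
  assumes j: "j \<in> V"
  shows "dcls S s c x j Plus * (c j / 2) + dcls S s c x j Minus * (c j / 4)
     + (\<Sum>i\<in>{i\<in>S. s i \<le> c j * beta}. s i * x i j) \<le> c j"
proof -
  define A where "A = Pcls S s c j Plus"
  define B where "B = Pcls S s c j Minus"
  define C where "C = {i\<in>S. s i \<le> c j * beta}"
  have cj: "c j > 0" using cpos j by auto
  have A: "A = {i\<in>S. c j / 2 < s i \<and> s i \<le> c j}" unfolding A_def Pcls_def by simp
  have B: "B = {i\<in>S. c j / 4 < s i \<and> s i \<le> c j / 2}" unfolding B_def Pcls_def by simp
  have fA: "finite A" "finite B" "finite C" unfolding A B C_def using fS by auto
  have dAB: "A \<inter> B = {}" "(A \<union> B) \<inter> C = {}" unfolding A B C_def beta_def using cj by auto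
  have sub: "A \<union> B \<union> C \<subseteq> S" unfolding A B C_def by auto
  have nn: "\<And>i. i \<in> S \<Longrightarrow> 0 \<le> x i j * s i" using xnn j spos by (simp add: less_imp_le)
  have "(\<Sum>i\<in>A. x i j * s i) + (\<Sum>i\<in>B. x i j * s i) + (\<Sum>i\<in>C. x i j * s i) = (\<Sum>i\<in>A \<union> B \<union> C. x i j * s i)"
    using fA dAB by (simp add: sum.union_disjoint)
  also have "\<dots> \<le> (\<Sum>i\<in>S. x i j * s i)" using sub fS nn by (intro sum_mono2) auto
  also have "\<dots> \<le> c j" using cap j by simp
  finally have tot: "(\<Sum>i\<in>A. x i j * s i) + (\<Sum>i\<in>B. x i j * s i) + (\<Sum>i\<in>C. x i j * s i) \<le> c j" .
  have "dcls S s c x j Plus * (c j / 2) = (\<Sum>i\<in>A. x i j * (c j / 2))"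
    unfolding dcls_def A_def by (simp add: sum_distrib_right)
  also have "\<dots> \<le> (\<Sum>i\<in>A. x i j * s i)"
    using xnn j by (intro sum_mono mult_left_mono) (auto simp: A)
  finally have a: "dcls S s c x j Plus * (c j / 2) \<le> (\<Sum>i\<in>A. x i j * s i)" .
  have "dcls S s c x j Minus * (c j / 4) = (\<Sum>i\<in>B. x i j * (c j / 4))"
    unfolding dcls_def B_def by (simp add: sum_distrib_right)
  also have "\<dots> \<le> (\<Sum>i\<in>B. x i j * s i)"
    using xnn j by (intro sum_mono mult_left_mono) (auto simp: B)
  finally have b: "dcls S s c x j Minus * (c j / 4) \<le> (\<Sum>i\<in>B. x i j * s i)" .
  have cc: "(\<Sum>i\<in>C. s i * x i j) = (\<Sum>i\<in>C. x i j * s i)" by (simp add: mult.commute)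
  show ?thesis using a b tot cc unfolding C_def by linarith
qed

lemma dplus_le: "j \<in> V \<Longrightarrow> dcls S s c x j Plus \<le> 2"
proof -
  assume j: "j \<in> V"
  have cj: "c j > 0" using cpos j by auto
  have "0 \<le> (\<Sum>i\<in>{i\<in>S. s i \<le> c j * beta}. s i * x i j)"
    using spos xnn j by (intro sum_nonneg mult_nonneg_nonneg) (auto simp: less_imp_le)
  moreover have "0 \<le> dcls S s c x j Minus * (c j / 4)" using d_nonneg j cj by simp
  ultimately have "dcls S s c x j Plus * (c j / 2) \<le> c j" using cap_split[OF j] by linarith
  then show ?thesis using cj by (simp add: field_simps)
qed

lemma dminus_le: "j \<in> V \<Longrightarrow> dcls S s c x j Minus \<le> 4"
proof -
  assume j: "j \<in> V"
  have cj: "c j > 0" using cpos j by auto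
  have "0 \<le> (\<Sum>i\<in>{i\<in>S. s i \<le> c j * beta}. s i * x i j)"
    using spos xnn j by (intro sum_nonneg mult_nonneg_nonneg) (auto simp: less_imp_le)
  moreover have "0 \<le> dcls S s c x j Plus * (c j / 2)" using d_nonneg j cj by simp
  ultimately have "dcls S s c x j Minus * (c j / 4) \<le> c j" using cap_split[OF j] by linarith
  then show ?thesis using cj by (simp add: field_simps)
qed

lemma h_props: "j \<in> V \<Longrightarrow> 0 \<le> hnode S s c x j \<and> hnode S s c x j \<le> 2"
  using dminus_le[of j] d_nonneg[of j Minus] unfolding hnode_def by auto

lemma plab_nonneg: "j \<in> V \<Longrightarrow> a \<in> {1,2,3} \<Longrightarrow> 0 \<le> plab S s c x j a"
  using h_props[of j] dplus_le[of j] d_nonneg[of j Plus] unfolding plab_def delta_def by auto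

lemma plab_sum: "(\<Sum>a\<in>{1,2,3}. plab S s c x j a) = 1"
  unfolding plab_def by simp

lemma Econs_ES:
  assumes "\<And>j a. j \<in> V \<Longrightarrow> \<zeta>' j = Some a \<Longrightarrow> a \<in> {1,2,3}"
  shows "Econs S V U s c req T w x \<zeta>' = ES V (\<lambda>_. {1,2,3}) (plab S s c x) (\<lambda>\<zeta>. Eslot S V U s c req T w x \<zeta> (\<lambda>_. None)) \<zeta>'"
proof -
  have el: "\<zeta> j \<in> (case \<zeta>' j of None \<Rightarrow> {1, 2, 3} | Some a \<Rightarrow> {a}) \<longleftrightarrow> \<zeta> j \<in> {1,2,3} \<and> (\<zeta>' j \<noteq> None \<longrightarrow> \<zeta> j = the (\<zeta>' j))"
    if "j \<in> V" for \<zeta> :: "'j \<Rightarrow> nat" and j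
    by (cases "\<zeta>' j") (use assms that in auto)
  have "PiE V (\<lambda>j. case \<zeta>' j of None \<Rightarrow> {1, 2, 3} | Some a \<Rightarrow> {a}) =
        {\<zeta> \<in> PiE V (\<lambda>_. {1,2,3}). \<forall>j\<in>V. \<zeta>' j \<noteq> None \<longrightarrow> \<zeta> j = the (\<zeta>' j)}"
    by (rule set_eqI) (auto simp: PiE_iff el)
  then show ?thesis unfolding Econs_def ES_def by simp
qed

lemma dcls_nz:
  assumes sig: "\<sigma> \<in> slots S V s c x \<zeta>" and pl: "\<zeta> (fst \<sigma>) \<in> {1,2} \<Longrightarrow> plab S s c x (fst \<sigma>) (\<zeta> (fst \<sigma>)) \<noteq> 0"
  shows "dcls S s c x (fst \<sigma>) (fst (snd \<sigma>)) \<noteq> 0"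
proof -
  obtain j r where sj: "\<sigma> = (j, r)" "j \<in> V" "r \<in> Kset S s c x j (\<zeta> j)"
    using sig unfolding slots_Sigma by auto
  consider "\<zeta> j = 1" "r = (Plus, 0)" | m where "\<zeta> j = 2" "r = (Minus, m)"
    | q m where "\<zeta> j = 3" "r = (Lvl q, m)" "m < ncnt S s c x j q"
    using sj(3) unfolding Kset_def by (auto split: if_splits)
  then show ?thesis
  proof cases
    case 1 then show ?thesis using pl sj unfolding plab_def by auto
  next
    case 2 then show ?thesis using pl sj unfolding plab_def hnode_def by auto
  next
    case 3 then show ?thesis using sj unfolding ncnt_def by auto
  qed
qed

lemma Econs_None_formula:
  "Econs S V U s c req T w x (\<lambda>_. None) =
     (\<Sum>k\<in>U. w k * (1 - (\<Prod>j\<in>V. \<Sum>a\<in>{1,2,3}. plab S s c x j a * Gk S s c x req T k j a)))"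
proof -
  define P where "P = plab S s c x"
  define G where "G = Gk S s c x req T"
  define Z where "Z = PiE V (\<lambda>_::'j. {1::nat,2,3})"
  have fZ: "finite Z" unfolding Z_def using fV by (intro finite_PiE) auto
  have "Econs S V U s c req T w x (\<lambda>_. None) = (\<Sum>\<zeta>\<in>Z. (\<Prod>j\<in>V. P j (\<zeta> j)) * Eslot S V U s c req T w x \<zeta> (\<lambda>_. None))"
    unfolding Econs_def Z_def P_def by simp
  also have "\<dots> = (\<Sum>\<zeta>\<in>Z. (\<Prod>j\<in>V. P j (\<zeta> j)) * (\<Sum>k\<in>U. w k * (1 - (\<Prod>j\<in>V. G k j (\<zeta> j)))))"
  proof (rule sum.cong[OF refl])
    fix \<zeta> assume z: "\<zeta> \<in> Z"
    show "(\<Prod>j\<in>V. P j (\<zeta> j)) * Eslot S V U s c req T w x \<zeta> (\<lambda>_. None) =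
          (\<Prod>j\<in>V. P j (\<zeta> j)) * (\<Sum>k\<in>U. w k * (1 - (\<Prod>j\<in>V. G k j (\<zeta> j))))"
    proof (cases "(\<Prod>j\<in>V. P j (\<zeta> j)) = 0")
      case True then show ?thesis by simp
    next
      case False
      then have nz: "\<And>j. j \<in> V \<Longrightarrow> P j (\<zeta> j) \<noteq> 0" using fV by auto
      have "Eslot S V U s c req T w x \<zeta> (\<lambda>_. None) =
          (\<Sum>k\<in>U. w k * (1 - (\<Prod>\<sigma>\<in>slots S V s c x \<zeta>. 1 - ek S s c x req T k \<sigma>)))"
        by (rule Eslot_formula, rule dcls_nz) (use nz slots_fst P_def in auto)
      also have "\<dots> = (\<Sum>k\<in>U. w k * (1 - (\<Prod>j\<in>V. G k j (\<zeta> j))))"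
      proof (intro sum.cong refl arg_cong2[where f="(*)"] arg_cong2[where f="(-)"])
        fix k
        have "(\<Prod>j\<in>V. G k j (\<zeta> j)) = (\<Prod>j\<in>V. \<Prod>r\<in>Kset S s c x j (\<zeta> j). 1 - ek S s c x req T k (j, r))"
          unfolding G_def Gk_def ..
        also have "\<dots> = (\<Prod>(j, r)\<in>Sigma V (\<lambda>j. Kset S s c x j (\<zeta> j)). 1 - ek S s c x req T k (j, r))"
          using fV finite_Kset by (intro prod.Sigma) auto
        also have "\<dots> = (\<Prod>\<sigma>\<in>slots S V s c x \<zeta>. 1 - ek S s c x req T k \<sigma>)"
          unfolding slots_Sigma by (simp add: case_prod_beta')
        finally show "(\<Prod>\<sigma>\<in>slots S V s c x \<zeta>. 1 - ek S s c x req T k \<sigma>) = (\<Prod>j\<in>V. G k j (\<zeta> j))" by simp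
      qed
      finally show ?thesis by simp
    qed
  qed
  also have "\<dots> = (\<Sum>k\<in>U. w k * ((\<Sum>\<zeta>\<in>Z. \<Prod>j\<in>V. P j (\<zeta> j)) - (\<Sum>\<zeta>\<in>Z. \<Prod>j\<in>V. P j (\<zeta> j) * G k j (\<zeta> j))))"
  proof -
    have "(\<Sum>\<zeta>\<in>Z. (\<Prod>j\<in>V. P j (\<zeta> j)) * (\<Sum>k\<in>U. w k * (1 - (\<Prod>j\<in>V. G k j (\<zeta> j)))))
        = (\<Sum>\<zeta>\<in>Z. \<Sum>k\<in>U. w k * ((\<Prod>j\<in>V. P j (\<zeta> j)) - (\<Prod>j\<in>V. P j (\<zeta> j) * G k j (\<zeta> j))))"
      by (intro sum.cong refl) (simp add: sum_distrib_left prod.distrib algebra_simps)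
    also have "\<dots> = (\<Sum>k\<in>U. \<Sum>\<zeta>\<in>Z. w k * ((\<Prod>j\<in>V. P j (\<zeta> j)) - (\<Prod>j\<in>V. P j (\<zeta> j) * G k j (\<zeta> j))))"
      by (rule sum.swap)
    also have "\<dots> = (\<Sum>k\<in>U. w k * ((\<Sum>\<zeta>\<in>Z. \<Prod>j\<in>V. P j (\<zeta> j)) - (\<Sum>\<zeta>\<in>Z. \<Prod>j\<in>V. P j (\<zeta> j) * G k j (\<zeta> j))))"
      by (simp add: sum_distrib_left[symmetric] sum_subtractf)
    finally show ?thesis .
  qed
  also have "\<dots> = (\<Sum>k\<in>U. w k * ((\<Prod>j\<in>V. \<Sum>a\<in>{1,2,3}. P j a) - (\<Prod>j\<in>V. \<Sum>a\<in>{1,2,3}. P j a * G k j a)))"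
  proof -
    have e1: "(\<Prod>j\<in>V. \<Sum>a\<in>{1,2,3}. P j a) = (\<Sum>\<zeta>\<in>Z. \<Prod>j\<in>V. P j (\<zeta> j))"
      unfolding Z_def by (rule prod_sum_PiE[OF fV]) auto
    have e2: "(\<Prod>j\<in>V. \<Sum>a\<in>{1,2,3}. P j a * G k j a) = (\<Sum>\<zeta>\<in>Z. \<Prod>j\<in>V. P j (\<zeta> j) * G k j (\<zeta> j))" for k
      unfolding Z_def by (rule prod_sum_PiE[OF fV]) auto
    show ?thesis by (simp only: e1 e2)
  qed
  also have "\<dots> = (\<Sum>k\<in>U. w k * (1 - (\<Prod>j\<in>V. \<Sum>a\<in>{1,2,3}. P j a * G k j a)))"
    using plab_sum unfolding P_def by simp
  finally show ?thesis unfolding P_def G_def .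
qed

end

lemma r_lower: fixes z :: real assumes "0 \<le> z"
  shows "z - z^2/2 \<le> 1 - 1/(1 + z + z^2/2)"
proof -
  have D: "1 + z + z^2/2 > 0" using assms by (simp add: add_pos_nonneg)
  have "(z - z^2/2) * (1 + z + z^2/2) \<le> z + z^2/2"
    by (simp add: algebra_simps power2_eq_square) (smt (verit) assms mult_nonneg_nonneg zero_le_square)
  then have "z - z^2/2 \<le> (z + z^2/2) / (1 + z + z^2/2)" using D by (simp add: pos_le_divide_eq)
  also have "\<dots> = 1 - 1/(1 + z + z^2/2)" using D by (simp add: field_simps)
  finally show ?thesis .
qed

lemma r_mono: fixes z z' :: real assumes "0 \<le> z'" "z' \<le> z"
  shows "1 - 1/(1 + z' + z'^2/2) \<le> 1 - 1/(1 + z + z^2/2)"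
proof -
  have D: "1 + z' + z'^2/2 > 0" using assms by (simp add: add_pos_nonneg)
  have "z'^2 \<le> z^2" using assms by (intro power_mono) auto
  then have "1 + z' + z'^2/2 \<le> 1 + z + z^2/2" using assms by linarith
  then have "1/(1 + z + z^2/2) \<le> 1/(1 + z' + z'^2/2)" using D by (intro divide_left_mono) auto
  then show ?thesis by simp
qed

lemma lvl_bound:
  fixes a u x t :: real and n :: nat
  assumes x0: "0 < x" and x1: "x \<le> 1" and u0: "0 < u" and a1: "a \<ge> 1/4 + u/2" and a2: "a \<ge> u"
    and t0: "0 \<le> t" and t1: "t \<le> 1" and nt: "real n * t \<ge> x / (4*u)"
  shows "a * (1 - (1 - t)^n) \<ge> 3/16 * x"
proof -
  define z where "z = x / (4*u)"
  have z0: "0 < z" unfolding z_def using x0 u0 by simp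
  have uz: "u * z = x/4" unfolding z_def using u0 by simp
  have "(1 - t)^n \<le> exp (-t) ^ n"
    using t1 by (intro power_mono) (auto simp: exp_ge_add_one_self[of "-t", simplified])
  also have "\<dots> = exp (- (real n * t))" by (simp add: exp_of_nat_mult[symmetric])
  also have "\<dots> \<le> exp (-z)" using nt unfolding z_def by simp
  also have "\<dots> \<le> 1/(1 + z + z^2/2)"
  proof -
    have "1 + z + z^2/2 \<le> exp z" using exp_lower_Taylor_quadratic[of z] z0 by simp
    moreover have "1 + z + z^2/2 > 0" using z0 by (simp add: add_pos_nonneg)
    ultimately show ?thesis by (simp add: exp_minus inverse_eq_divide divide_left_mono)
  qed
  finally have W: "1 - (1-t)^n \<ge> 1 - 1/(1 + z + z^2/2)" by simp
  define r where "r = 1 - 1/(1 + z + z^2/2)"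
  have a0: "0 \<le> a" using a2 u0 by simp
  have ar: "a * (1 - (1-t)^n) \<ge> a * r" using W a0 unfolding r_def by (intro mult_left_mono) auto
  have "a * r \<ge> 3/16 * x"
  proof (cases "z \<le> 1")
    case True
    have rl: "r \<ge> z - z^2/2" unfolding r_def using r_lower z0 by simp
    have rz: "z - z^2/2 \<ge> 0" using True z0 by (simp add: power2_eq_square algebra_simps)
    show ?thesis
    proof (cases "u \<ge> 1/2")
      case True
      have zh: "z \<le> 1/2" unfolding z_def using True x1 u0 by (simp add: field_simps)
      have "(x/4) * (3/4) \<le> (x/4) * (1 - z/2)" using zh x0 by (intro mult_left_mono) auto
      also have "(x/4) * (1 - z/2) = u * (z - z^2/2)"
      proof -
        have "u * (z - z^2/2) = (u*z) - (u*z)*z/2" by (simp add: power2_eq_square algebra_simps)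
        then show ?thesis using uz by (simp add: algebra_simps)
      qed
      also have "u * (z - z^2/2) \<le> a * r" by (rule mult_mono[OF a2 rl]) (use a0 rz in auto)
      finally show ?thesis by simp
    next
      case False
      have zx: "z \<ge> x/2" unfolding z_def using False u0 x0 by (simp add: field_simps)
      have "x/(8*z) = u/2" using uz z0 by (simp add: field_simps)
      then have au: "a \<ge> 1/4 + x/(8*z)" using a1 by simp
      have "3/16 * x \<le> 3/16 * x + ((1/8) * (z - x/2) * (1 - z) + z * (1 - x)/8)"
        using zx True x1 z0 by (simp add: mult_nonneg_nonneg)
      also have "\<dots> = (z/4 + x/8) * (1 - z/2)"
        by (simp add: algebra_simps add_divide_distrib diff_divide_distrib)
      also have "\<dots> = (1/4 + x/(8*z)) * (z - z^2/2)"
      proof -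
        have e1: "(1/4 + x/(8*z)) * z = z/4 + x/8" using z0 by (simp add: distrib_right)
        have e2: "z - z^2/2 = z * (1 - z/2)" by (simp add: power2_eq_square right_diff_distrib)
        show ?thesis unfolding e2 mult.assoc[symmetric] e1 ..
      qed
      also have "\<dots> \<le> a * r"
        by (rule mult_mono[OF au rl]) (use a0 rz in auto)
      finally show ?thesis .
    qed
  next
    case False
    show ?thesis
    proof (cases "z \<le> 2")
      case True
      have "r \<ge> 1 - 1/(1 + 1 + 1^2/2)" unfolding r_def using False by (intro r_mono) auto
      then have r35: "r \<ge> 3/5" by simp
      have "u * z \<le> u * 2" using True u0 by (intro mult_left_mono) auto
      then have "u \<ge> x/8" using uz by simp
      then have a3: "a \<ge> 1/4 + x/16" using a1 by simp
      have "a * r \<ge> (1/4 + x/16) * (3/5)" using a3 r35 x0 by (intro mult_mono) auto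
      then show ?thesis using x1 by simp
    next
      case False
      have "r \<ge> 1 - 1/(1 + 2 + 2^2/2)" unfolding r_def using False by (intro r_mono) auto
      then have r45: "r \<ge> 4/5" by simp
      have "a \<ge> 1/4" using a1 u0 by simp
      then have "a * r \<ge> (1/4) * (4/5)" using r45 by (intro mult_mono) auto
      then show ?thesis using x1 by simp
    qed
  qed
  then show ?thesis using ar by simp
qed

lemma minus_bound:
  fixes d x :: real assumes x0: "0 < x" and xd: "x \<le> d" and x1: "x \<le> 1"
  shows "1/4 * (if d < 2 then d else d/2) * (1 - (1 - x/d)^2) \<ge> 3/16 * x"
proof -
  define t where "t = x / d"
  have d0: "d > 0" using x0 xd by simp
  have t1: "t \<le> 1" "0 \<le> t" unfolding t_def using xd d0 x0 by auto
  have dt: "d * t = x" unfolding t_def using d0 by simp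
  have e: "1 - (1 - t)^2 = t * (2 - t)" by (simp add: power2_eq_square algebra_simps)
  show ?thesis
  proof (cases "d < 2")
    case True
    have "1/4 * d * (t * (2 - t)) = 1/4 * x * (2 - t)" using dt by (simp add: algebra_simps)
    also have "\<dots> \<ge> 1/4 * x * 1" using t1 x0 by (intro mult_left_mono) auto
    finally show ?thesis using True e t_def x0 by simp
  next
    case False
    have th: "t \<le> 1/2" unfolding t_def using False x1 d0 by (simp add: field_simps)
    have "1/4 * (d/2) * (t * (2 - t)) = 1/8 * x * (2 - t)" using dt by (simp add: algebra_simps)
    also have "\<dots> \<ge> 1/8 * x * (3/2)" using th x0 by (intro mult_left_mono) auto
    finally show ?thesis using False e t_def by simp
  qed
qed

lemma exp_user_bound:
  fixes y :: real assumes "0 \<le> y" "y \<le> 1"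
  shows "y / 6 \<le> 1 - exp (-(3/16) * y)"
proof -
  define z where "z = 3/16 * y"
  have z0: "0 \<le> z" unfolding z_def using assms by simp
  have "exp (-z) \<le> 1/(1 + z + z^2/2)"
  proof -
    have "1 + z + z^2/2 \<le> exp z" using exp_lower_Taylor_quadratic[of z] z0 by simp
    moreover have "1 + z + z^2/2 > 0" using z0 by (simp add: add_pos_nonneg)
    ultimately show ?thesis by (simp add: exp_minus inverse_eq_divide divide_left_mono)
  qed
  then have "z - z^2/2 \<le> 1 - exp (-z)" using r_lower[OF z0] by simp
  moreover have "y / 6 \<le> z - z^2/2"
  proof -
    have "z^2 \<le> 3/16 * z" unfolding z_def power2_eq_square using assms
      by (intro mult_right_mono) auto
    then have "z - z^2/2 \<ge> z - 3/32 * z" by linarith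
    moreover have "y / 6 \<le> z - 3/32 * z" unfolding z_def using assms by simp
    ultimately show ?thesis by linarith
  qed
  ultimately show ?thesis unfolding z_def by simp
qed

lemma const_bound: "(1 - exp (-1)) / 4 \<le> (1/6::real)"
proof -
  have "exp (-1) = 1 / exp (1::real)" by (simp add: exp_minus inverse_eq_divide)
  moreover have "1 / exp (1::real) \<ge> 1/3" using exp_le by (intro divide_left_mono) auto
  ultimately have "exp (-1::real) \<ge> 1/3" by simp
  then show ?thesis by (simp add: field_simps)
qed

context spsc
begin

lemma ek_range: "j \<in> V \<Longrightarrow> 0 \<le> ek S s c x req T k (j, r) \<and> ek S s c x req T k (j, r) \<le> 1"
proof -
  assume j: "j \<in> V"
  show ?thesis
  proof (cases "j \<in> T k \<and> req k \<in> Pcls S s c j (fst r)")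
    case True
    have "req k \<in> S" using True Pcls_sub[of S s c j "fst r"] by blast
    then have x0: "0 \<le> x (req k) j" using xnn j by blast
    have xd: "x (req k) j \<le> dcls S s c x j (fst r)" using x_le_d[OF j] True by blast
    have "x (req k) j / dcls S s c x j (fst r) \<le> 1"
      using xd x0 by (cases "dcls S s c x j (fst r) = 0") auto
    then show ?thesis using True x0 d_nonneg[OF j] unfolding ek_def pslot_def slot_range_def by auto
  next
    case False
    then show ?thesis unfolding ek_def slot_range_def by auto
  qed
qed

lemma Gk_range: "j \<in> V \<Longrightarrow> 0 \<le> Gk S s c x req T k j a \<and> Gk S s c x req T k j a \<le> 1"
  unfolding Gk_def using ek_range by (auto intro!: prod_nonneg prod_le_1)

lemma Q_le:
  assumes j: "j \<in> V" and a0: "a0 \<in> {1,2,3}"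
  shows "(\<Sum>a\<in>{1,2,3}. plab S s c x j a * Gk S s c x req T k j a) \<le> 1 - plab S s c x j a0 * (1 - Gk S s c x req T k j a0)"
proof -
  have le: "plab S s c x j a * Gk S s c x req T k j a \<le> plab S s c x j a" if "a \<in> {1,2,3}" for a
    using plab_nonneg[OF j that] Gk_range[OF j, of k a] by (simp add: mult_left_le)
  have s1: "plab S s c x j 1 + plab S s c x j 2 + plab S s c x j 3 = 1" using plab_sum[of j] by simp
  have se: "(\<Sum>a\<in>{1,2,3}. plab S s c x j a * Gk S s c x req T k j a) =
     plab S s c x j 1 * Gk S s c x req T k j 1 + plab S s c x j 2 * Gk S s c x req T k j 2 + plab S s c x j 3 * Gk S s c x req T k j 3"
    by simp
  have de: "plab S s c x j a0 * (1 - Gk S s c x req T k j a0) = plab S s c x j a0 - plab S s c x j a0 * Gk S s c x req T k j a0"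
    by (simp add: right_diff_distrib)
  from a0 consider "a0 = 1" | "a0 = 2" | "a0 = 3" by auto
  then show ?thesis
    using le[of 1] le[of 2] le[of 3] s1 unfolding se de by cases auto
qed

lemma Q_nonneg:
  assumes j: "j \<in> V"
  shows "0 \<le> (\<Sum>a\<in>{1,2,3}. plab S s c x j a * Gk S s c x req T k j a)"
  using plab_nonneg[OF j] Gk_range[OF j] by (intro sum_nonneg mult_nonneg_nonneg) auto

lemma exists_Lvl:
  assumes j: "j \<in> V" and i: "i \<in> S" and si: "s i \<le> c j / 4"
  shows "\<exists>q. 1 \<le> q \<and> i \<in> Pcls S s c j (Lvl q)"
proof -
  have cj: "c j > 0" using cpos j by auto
  have s0: "s i > 0" using spos i by auto
  define P where "P = (\<lambda>q. gamma ^ q * c j * beta < s i)"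
  obtain n where n: "(1/2::real) ^ n < s i / (c j * beta)"
    using real_arch_pow_inv[of "s i / (c j * beta)" "1/2"] s0 cj by (auto simp: beta_def)
  have "P n" unfolding P_def gamma_def using n cj by (simp add: beta_def field_simps)
  define q where "q = (LEAST q. P q)"
  have Pq: "P q" unfolding q_def by (rule LeastI[of P n, OF \<open>P n\<close>])
  have q0: "q \<noteq> 0"
  proof
    assume "q = 0" then show False using Pq si unfolding P_def beta_def by simp
  qed
  have "\<not> P (q - 1)" unfolding q_def using q0 not_less_Least[of "q - 1" P] q_def by auto
  then have "s i \<le> gamma ^ (q - 1) * c j * beta" unfolding P_def by simp
  then show ?thesis using Pq q0 i unfolding P_def Pcls_def by (intro exI[of _ q]) auto
qed

lemma node_bound:
  assumes k: "k \<in> U" and j: "j \<in> V" and jT: "j \<in> T k"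
  shows "(\<Sum>a\<in>{1,2,3}. plab S s c x j a * Gk S s c x req T k j a) \<le> 1 - 3/16 * x (req k) j"
proof -
  define i where "i = req k"
  define X where "X = x i j"
  define Q where "Q = (\<Sum>a\<in>{1,2,3}. plab S s c x j a * Gk S s c x req T k j a)"
  have iS: "i \<in> S" using k users unfolding i_def by auto
  have cj: "c j > 0" using cpos j by auto
  have X0: "0 \<le> X" unfolding X_def using xnn iS j by auto
  have X1: "X \<le> 1" unfolding X_def using xle1 iS j by auto
  have "0 \<le> plab S s c x j 1 * (1 - Gk S s c x req T k j 1)"
    using plab_nonneg[OF j, of 1] Gk_range[OF j, of k 1] by (intro mult_nonneg_nonneg) auto
  then have Q1: "Q \<le> 1" using Q_le[OF j, of 1 k] unfolding Q_def by simp
  show ?thesis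
  proof (cases "X = 0")
    case True then show ?thesis using Q1 unfolding Q_def X_def i_def by simp
  next
    case False
    then have Xp: "X > 0" using X0 by simp
    have sc: "s i \<le> c j" using xbig[OF iS j] False unfolding X_def by force
    consider "c j / 2 < s i" | "c j / 4 < s i \<and> s i \<le> c j / 2" | "s i \<le> c j / 4" by linarith
    then have "Q \<le> 1 - 3/16 * X"
    proof cases
      case 1
      have iP: "i \<in> Pcls S s c j Plus" using 1 sc iS unfolding Pcls_def by auto
      define d where "d = dcls S s c x j Plus"
      have Xd: "X \<le> d" unfolding X_def d_def using x_le_d[OF j iP] .
      have G1: "Gk S s c x req T k j 1 = 1 - X / d"
        unfolding Gk_def Kset_def ek_def pslot_def slot_range_def using jT iP
        by (simp add: i_def X_def d_def)
      have "plab S s c x j 1 * (1 - Gk S s c x req T k j 1) = 1/4 * X"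
        unfolding G1 plab_def delta_def d_def[symmetric] using Xd Xp by auto
      then show ?thesis using Q_le[OF j, of 1 k] Xp unfolding Q_def by simp
    next
      case 2
      have iP: "i \<in> Pcls S s c j Minus" using 2 iS unfolding Pcls_def by auto
      define d where "d = dcls S s c x j Minus"
      have Xd: "X \<le> d" unfolding X_def d_def using x_le_d[OF j iP] .
      have G2: "Gk S s c x req T k j 2 = (1 - X / d)^2"
        unfolding Gk_def Kset_def ek_def pslot_def slot_range_def using jT iP
        by (simp add: i_def X_def d_def power2_eq_square)
      have "plab S s c x j 2 * (1 - Gk S s c x req T k j 2) = 1/4 * (if d < 2 then d else d/2) * (1 - (1 - X/d)^2)"
        unfolding G2 plab_def delta_def hnode_def d_def by simp
      also have "\<dots> \<ge> 3/16 * X" by (rule minus_bound[OF Xp Xd X1])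
      finally show ?thesis using Q_le[OF j, of 2 k] unfolding Q_def by simp
    next
      case 3
      obtain q where q: "1 \<le> q" "i \<in> Pcls S s c j (Lvl q)" using exists_Lvl[OF j iS 3] by blast
      define d where "d = dcls S s c x j (Lvl q)"
      define n where "n = ncnt S s c x j q"
      define t where "t = X / d"
      have Xd: "X \<le> d" unfolding X_def d_def using x_le_d[OF j q(2)] .
      have dp: "d > 0" using Xd Xp by simp
      have t0: "0 \<le> t" "t \<le> 1" unfolding t_def using Xd Xp dp by auto
      define B where "B = {(Lvl q, m) | m. m < n}"
      have Bsub: "B \<subseteq> Kset S s c x j 3" unfolding B_def Kset_def n_def using q by auto
      have fK: "finite (Kset S s c x j 3)" using finite_Kset[OF j] .
      have ekB: "\<And>r. r \<in> B \<Longrightarrow> ek S s c x req T k (j, r) = t"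
        unfolding B_def ek_def pslot_def slot_range_def t_def X_def d_def using jT q by (auto simp: i_def)
      have "card B = n"
      proof -
        have "B = (\<lambda>m. (Lvl q, m)) ` {..<n}" unfolding B_def by auto
        moreover have "inj_on (\<lambda>m. (Lvl q, m)) {..<n}" by (auto simp: inj_on_def)
        ultimately show ?thesis by (simp add: card_image)
      qed
      have "Gk S s c x req T k j 3 = (\<Prod>r\<in>Kset S s c x j 3 - B. 1 - ek S s c x req T k (j, r)) * (\<Prod>r\<in>B. 1 - ek S s c x req T k (j, r))"
        unfolding Gk_def by (rule prod.subset_diff[OF Bsub fK])
      also have "\<dots> \<le> 1 * (\<Prod>r\<in>B. 1 - ek S s c x req T k (j, r))"
      proof -
        have f01: "\<And>r. 0 \<le> 1 - ek S s c x req T k (j, r) \<and> 1 - ek S s c x req T k (j, r) \<le> 1"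
          using ek_range[OF j] by auto
        show ?thesis by (intro mult_right_mono prod_le_1 prod_nonneg) (use f01 in auto)
      qed
      also have "(\<Prod>r\<in>B. 1 - ek S s c x req T k (j, r)) = (1 - t)^n"
        using ekB \<open>card B = n\<close> by simp
      finally have G3: "Gk S s c x req T k j 3 \<le> (1 - t)^n" by simp
      define Cs where "Cs = (\<Sum>i\<in>{i\<in>S. s i \<le> c j * beta}. s i * x i j)"
      define u where "u = Cs / c j"
      define a where "a = plab S s c x j 3"
      have iC: "i \<in> {i\<in>S. s i \<le> c j * beta}" using 3 iS by (simp add: beta_def)
      have "s i * X \<le> Cs" unfolding Cs_def X_def
        using iC fS spos xnn j by (intro member_le_sum) (auto intro: mult_nonneg_nonneg xnn less_imp_le)
      moreover have "s i * X > 0" using Xp spos iS by simp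
      ultimately have Cp: "Cs > 0" by linarith
      have up: "u > 0" unfolding u_def using Cp cj by simp
      have capu: "dcls S s c x j Plus / 2 + dcls S s c x j Minus / 4 + u \<le> 1"
        using cap_split[OF j] cj unfolding u_def Cs_def by (simp add: field_simps)
      have dP: "0 \<le> dcls S s c x j Plus" "0 \<le> dcls S s c x j Minus" using d_nonneg[OF j] by auto
      have hle: "hnode S s c x j \<le> 1 + dcls S s c x j Minus / 2" "hnode S s c x j \<le> dcls S s c x j Minus"
        unfolding hnode_def using dP by auto
      have a1: "a \<ge> 1/4 + u/2" unfolding a_def plab_def delta_def using capu hle dP by simp
      have a2: "a \<ge> u" unfolding a_def plab_def delta_def using capu hle dP by simp
      have nvd: "real n \<ge> vnode S s c x j * d"
      proof -
        have "vnode S s c x j \<ge> 0" unfolding vnode_def using Cp cj unfolding Cs_def by (simp add: delta_def)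
        then have "vnode S s c x j * d \<ge> 0" using dp by simp
        then show ?thesis unfolding n_def ncnt_def d_def by linarith
      qed
      have "real n * t \<ge> vnode S s c x j * d * t" using nvd t0 by (intro mult_right_mono) auto
      also have "vnode S s c x j * d * t = vnode S s c x j * X" unfolding t_def using dp by simp
      also have "vnode S s c x j * X = X / (4 * u)"
        unfolding vnode_def u_def Cs_def[symmetric] delta_def using cj Cp by (simp add: field_simps)
      finally have nt: "real n * t \<ge> X / (4 * u)" .
      have "3/16 * X \<le> a * (1 - (1 - t)^n)" by (rule lvl_bound[OF Xp X1 up a1 a2 t0 nt])
      also have "\<dots> \<le> a * (1 - Gk S s c x req T k j 3)"
        using G3 plab_nonneg[OF j, of 3] unfolding a_def by (intro mult_left_mono) auto
      finally show ?thesis using Q_le[OF j, of 3 k] unfolding Q_def a_def by simp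
    qed
    then show ?thesis unfolding Q_def X_def i_def .
  qed
qed

end

context spsc
begin

lemma Q_le1: "j \<in> V \<Longrightarrow> (\<Sum>a\<in>{1,2,3}. plab S s c x j a * Gk S s c x req T k j a) \<le> 1"
proof -
  assume j: "j \<in> V"
  have "0 \<le> plab S s c x j 1 * (1 - Gk S s c x req T k j 1)"
    using plab_nonneg[OF j, of 1] Gk_range[OF j, of k 1] by (intro mult_nonneg_nonneg) auto
  then show ?thesis using Q_le[OF j, of 1 k] by simp
qed

lemma user_bound:
  assumes k: "k \<in> U"
  shows "(\<Prod>j\<in>V. \<Sum>a\<in>{1,2,3}. plab S s c x j a * Gk S s c x req T k j a) \<le> exp (-(3/16) * y k)"
proof -
  define f where "f = (\<lambda>j. if j \<in> T k then 3/16 * x (req k) j else 0)"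
  have kk: "req k \<in> S" "T k \<subseteq> V" using users k by auto
  have f1: "f j \<le> 1" if "j \<in> V" for j
  proof -
    have "x (req k) j \<le> 1" using xle1 kk that by auto
    then show ?thesis unfolding f_def by auto
  qed
  have "(\<Prod>j\<in>V. \<Sum>a\<in>{1,2,3}. plab S s c x j a * Gk S s c x req T k j a) \<le> (\<Prod>j\<in>V. 1 - f j)"
  proof (rule prod_mono)
    fix j assume j: "j \<in> V"
    show "0 \<le> (\<Sum>a\<in>{1,2,3}. plab S s c x j a * Gk S s c x req T k j a) \<and>
          (\<Sum>a\<in>{1,2,3}. plab S s c x j a * Gk S s c x req T k j a) \<le> 1 - f j"
      using Q_nonneg[OF j] node_bound[OF k j] Q_le1[OF j] unfolding f_def by auto
  qed
  also have "\<dots> \<le> (\<Prod>j\<in>V. exp (- f j))"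
  proof (rule prod_mono)
    fix j assume j: "j \<in> V"
    show "0 \<le> 1 - f j \<and> 1 - f j \<le> exp (- f j)" using f1[OF j] exp_ge_add_one_self[of "- f j"] by simp
  qed
  also have "\<dots> = exp (- (\<Sum>j\<in>V. f j))" using exp_sum[OF fV, of "\<lambda>j. - f j"] by (simp add: sum_negf)
  also have "(\<Sum>j\<in>V. f j) = 3/16 * (\<Sum>j\<in>T k. x (req k) j)"
  proof -
    have "(\<Sum>j\<in>V. f j) = (\<Sum>j\<in>V \<inter> T k. 3/16 * x (req k) j)"
      unfolding f_def by (rule sum.inter_restrict[OF fV, symmetric])
    also have "V \<inter> T k = T k" using kk by auto
    finally show ?thesis by (simp add: sum_distrib_left)
  qed
  also have "exp (- (3/16 * (\<Sum>j\<in>T k. x (req k) j))) \<le> exp (-(3/16) * y k)"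
    using lpf k unfolding lp_feasible_def by auto
  finally show ?thesis .
qed

lemma Econs_lower:
  "(1 - exp (-1)) / 4 * (\<Sum>k\<in>U. y k * w k) \<le> Econs S V U s c req T w x (\<lambda>_. None)"
proof -
  have "(1 - exp (-1)) / 4 * (\<Sum>k\<in>U. y k * w k) \<le> (\<Sum>k\<in>U. w k * (y k / 6))"
  proof -
    have "(1 - exp (-1)) / 4 * (\<Sum>k\<in>U. y k * w k) = (\<Sum>k\<in>U. (1 - exp (-1)) / 4 * (y k * w k))"
      by (simp add: sum_distrib_left)
    also have "\<dots> \<le> (\<Sum>k\<in>U. 1/6 * (y k * w k))"
    proof (rule sum_mono)
      fix k assume k: "k \<in> U"
      have "0 \<le> y k * w k" using lpf k w_nonneg[OF k] unfolding lp_feasible_def by auto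
      then show "(1 - exp (-1)) / 4 * (y k * w k) \<le> 1/6 * (y k * w k)"
        using const_bound by (intro mult_right_mono) auto
    qed
    also have "\<dots> = (\<Sum>k\<in>U. w k * (y k / 6))" by (simp add: algebra_simps)
    finally show ?thesis .
  qed
  also have "\<dots> \<le> (\<Sum>k\<in>U. w k * (1 - (\<Prod>j\<in>V. \<Sum>a\<in>{1,2,3}. plab S s c x j a * Gk S s c x req T k j a)))"
  proof (rule sum_mono)
    fix k assume k: "k \<in> U"
    have y01: "0 \<le> y k" "y k \<le> 1" using lpf k unfolding lp_feasible_def by auto
    have "y k / 6 \<le> 1 - exp (-(3/16) * y k)" by (rule exp_user_bound[OF y01])
    also have "\<dots> \<le> 1 - (\<Prod>j\<in>V. \<Sum>a\<in>{1,2,3}. plab S s c x j a * Gk S s c x req T k j a)"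
      using user_bound[OF k] by simp
    finally show "w k * (y k / 6) \<le> w k * (1 - (\<Prod>j\<in>V. \<Sum>a\<in>{1,2,3}. plab S s c x j a * Gk S s c x req T k j a))"
      using w_nonneg[OF k] by (intro mult_left_mono) auto
  qed
  also have "\<dots> = Econs S V U s c req T w x (\<lambda>_. None)" by (rule Econs_None_formula[symmetric])
  finally show ?thesis .
qed

lemma Eslot_nonneg: "0 \<le> Eslot S V U s c req T w x \<zeta> \<tau>'"
  unfolding Eslot_ES by (rule ES_nonneg) (auto intro: pslot_nonneg TR_nonneg)

lemma slots_restrict: "slots S V s c x (restrict lam V) = slots S V s c x lam"
  unfolding slots_def by auto

lemma sa2_chain:
  assumes run: "sa2_run S V U s c req T w x js lam sl psi"
  shows "Econs S V U s c req T w x (\<lambda>_. None) \<le> total_reward U req T w (sa2_output S V s c x lam psi)"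
proof -
  define lpref where "lpref = (\<lambda>t j. if j \<in> set (take t js) then Some (lam j) else None)"
  define L where "L = slots S V s c x lam"
  define spref where "spref = (\<lambda>t \<sigma>. if \<sigma> \<in> set (take t sl) then Some (psi \<sigma>) else None)"
  have R: "distinct js" "set js = V" "\<forall>j\<in>V. lam j \<in> {1, 2, 3}"
     "\<forall>t < length js. \<forall>b \<in> {1, 2, 3}.
        Econs S V U s c req T w x ((lpref t)(js ! t := Some b))
          \<le> Econs S V U s c req T w x (lpref (Suc t))"
     "distinct sl" "set sl = L" "\<forall>\<sigma>\<in>L. psi \<sigma> \<in> slot_range S s c \<sigma>"
     "\<forall>t < length sl. \<forall>i \<in> slot_range S s c (sl ! t).
        Eslot S V U s c req T w x lam ((spref t)(sl ! t := Some i))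
          \<le> Eslot S V U s c req T w x lam (spref (Suc t))"
    using run unfolding sa2_run_def Let_def lpref_def L_def spref_def by auto
  define F where "F = (\<lambda>\<zeta>. Eslot S V U s c req T w x \<zeta> (\<lambda>_. None))"
  define P where "P = plab S s c x"
  have EE: "Econs S V U s c req T w x \<zeta>' = ES V (\<lambda>_. {1,2,3}) P F \<zeta>'"
    if "\<And>j a. j \<in> V \<Longrightarrow> \<zeta>' j = Some a \<Longrightarrow> a \<in> {1,2,3}" for \<zeta>'
    unfolding P_def F_def by (rule Econs_ES[OF that])
  have lpv: "\<And>t j a. j \<in> V \<Longrightarrow> lpref t j = Some a \<Longrightarrow> a \<in> {1,2,3}"
    unfolding lpref_def using R(3) by (auto split: if_splits)
  have chain1: "ES V (\<lambda>_. {1,2,3}) P F (lpref 0) \<le> ES V (\<lambda>_. {1,2,3}) P F (lpref (length js))"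
  proof (rule ES_chain[OF fV _ _ _ _ R(1) R(2) lpref_def])
    show "\<And>\<sigma> r. \<sigma> \<in> V \<Longrightarrow> r \<in> {1,2,3} \<Longrightarrow> 0 \<le> P \<sigma> r" unfolding P_def by (rule plab_nonneg)
    show "\<And>\<sigma>. \<sigma> \<in> V \<Longrightarrow> (\<Sum>i\<in>{1,2,3}. P \<sigma> i) = 1 \<or> (\<Sum>i\<in>{1,2,3}. P \<sigma> i) = 0"
      unfolding P_def using plab_sum by auto
    show "\<And>\<tau>. 0 \<le> F \<tau>" unfolding F_def by (rule Eslot_nonneg)
    show "\<forall>t<length js. \<forall>i\<in>{1,2,3}. ES V (\<lambda>_. {1,2,3}) P F ((lpref t)(js ! t := Some i)) \<le> ES V (\<lambda>_. {1,2,3}) P F (lpref (Suc t))"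
    proof (intro allI impI ballI)
      fix t i assume t: "t < length js" and i: "i \<in> {1::nat,2,3}"
      have "ES V (\<lambda>_. {1,2,3}) P F ((lpref t)(js ! t := Some i)) = Econs S V U s c req T w x ((lpref t)(js ! t := Some i))"
        by (rule EE[symmetric]) (use lpv i in \<open>auto split: if_splits\<close>)
      also have "\<dots> \<le> Econs S V U s c req T w x (lpref (Suc t))" using R(4) t i by auto
      also have "\<dots> = ES V (\<lambda>_. {1,2,3}) P F (lpref (Suc t))" by (rule EE) (use lpv in auto)
      finally show "ES V (\<lambda>_. {1,2,3}) P F ((lpref t)(js ! t := Some i)) \<le> ES V (\<lambda>_. {1,2,3}) P F (lpref (Suc t))" .
    qed
  qed auto
  have l0: "lpref 0 = (\<lambda>_. None)" unfolding lpref_def by simp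
  have e0: "Econs S V U s c req T w x (\<lambda>_. None) = ES V (\<lambda>_. {1,2,3}) P F (lpref 0)"
    unfolding l0 by (rule EE) auto
  have eN: "ES V (\<lambda>_. {1,2,3}) P F (lpref (length js)) = F (restrict lam V)"
    by (rule ES_full) (use R(2) R(3) lpref_def in auto)
  have eF: "F (restrict lam V) = Eslot S V U s c req T w x lam (\<lambda>_. None)"
    unfolding F_def Eslot_ES slots_restrict ..
  define p where "p = pslot S s c x"
  define G where "G = (\<lambda>\<tau>. total_reward U req T w (Xtau L \<tau>))"
  have SE: "Eslot S V U s c req T w x lam \<tau>' = ES L (slot_range S s c) p G \<tau>'" for \<tau>'
    unfolding Eslot_ES L_def p_def G_def ..
  have chain2: "ES L (slot_range S s c) p G (spref 0) \<le> ES L (slot_range S s c) p G (spref (length sl))"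
  proof (rule ES_chain[OF _ _ _ _ _ R(5) R(6) spref_def])
    show "finite L" unfolding L_def by (rule finite_slots)
    show "\<And>\<sigma>. \<sigma> \<in> L \<Longrightarrow> finite (slot_range S s c \<sigma>)" by (rule fR)
    show "\<And>\<sigma> r. \<sigma> \<in> L \<Longrightarrow> r \<in> slot_range S s c \<sigma> \<Longrightarrow> 0 \<le> p \<sigma> r"
      unfolding p_def L_def by (rule pslot_nonneg)
    show "\<And>\<sigma>. \<sigma> \<in> L \<Longrightarrow> (\<Sum>i\<in>slot_range S s c \<sigma>. p \<sigma> i) = 1 \<or> (\<Sum>i\<in>slot_range S s c \<sigma>. p \<sigma> i) = 0"
      unfolding p_def by (rule psum)
    show "\<And>\<tau>. 0 \<le> G \<tau>" unfolding G_def by (rule TR_nonneg)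
    show "\<forall>t<length sl. \<forall>i\<in>slot_range S s c (sl ! t). ES L (slot_range S s c) p G ((spref t)(sl ! t := Some i)) \<le> ES L (slot_range S s c) p G (spref (Suc t))"
      using R(8) unfolding SE .
  qed
  have s0: "spref 0 = (\<lambda>_. None)" unfolding spref_def by simp
  have sN: "ES L (slot_range S s c) p G (spref (length sl)) = G (restrict psi L)"
    by (rule ES_full) (use R(6) R(7) spref_def in auto)
  have gN: "G (restrict psi L) = total_reward U req T w (sa2_output S V s c x lam psi)"
  proof -
    have "Xtau L (restrict psi L) = Xtau L psi" unfolding Xtau_def by auto
    then show ?thesis unfolding G_def sa2_output_def L_def by simp
  qed
  have "Econs S V U s c req T w x (\<lambda>_. None) \<le> Eslot S V U s c req T w x lam (\<lambda>_. None)"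
    using chain1 e0 eN eF by simp
  also have "\<dots> = ES L (slot_range S s c) p G (spref 0)" unfolding SE s0 ..
  also have "\<dots> \<le> total_reward U req T w (sa2_output S V s c x lam psi)" using chain2 sN gN by simp
  finally show ?thesis .
qed

end

lemma opt_le_lp:
  fixes S :: "'i set" and V :: "'j set" and U :: "'k set"
  assumes fS: "finite S" and fV: "finite V" and fU: "finite U"
    and spos: "\<forall>i\<in>S. s i > 0" and cpos: "\<forall>j\<in>V. c j > 0"
    and users: "\<forall>k\<in>U. req k \<in> S \<and> T k \<subseteq> V \<and> w k > 0"
    and opt: "lp_optimal S V U s c req T w x y"
  shows "opt_reward S V U s c req T w \<le> (\<Sum>k\<in>U. y k * w k)"
proof -
  define FP where "FP = {X. feasible_placement S V s c X}"
  have TRsum: "total_reward U req T w X = (\<Sum>k\<in>{k\<in>U. T k \<inter> X (req k) \<noteq> {}}. w k)" for X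
  proof -
    have "\<And>k. w k * (if T k \<inter> X (req k) \<noteq> {} then 1 else 0) = (if T k \<inter> X (req k) \<noteq> {} then w k else 0)" by simp
    then show ?thesis unfolding total_reward_def using sum.inter_filter[OF fU, of w "\<lambda>k. T k \<inter> X (req k) \<noteq> {}"] by simp
  qed
  have fin: "finite (total_reward U req T w ` FP)"
  proof (rule finite_subset[of _ "(\<lambda>K. \<Sum>k\<in>K. w k) ` Pow U"])
    show "total_reward U req T w ` FP \<subseteq> (\<lambda>K. \<Sum>k\<in>K. w k) ` Pow U"
      unfolding TRsum by auto
  qed (use fU in auto)
  have ne: "(\<lambda>_. {}) \<in> FP" unfolding FP_def feasible_placement_def placement_def
    using cpos by (auto simp: less_imp_le)
  have bound: "total_reward U req T w X \<le> (\<Sum>k\<in>U. y k * w k)" if X: "X \<in> FP" for X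
  proof -
    define x' where "x' = (\<lambda>i j. if j \<in> X i then 1 else (0::real))"
    define y' where "y' = (\<lambda>k. if T k \<inter> X (req k) \<noteq> {} then 1 else (0::real))"
    have feas: "placement S V X" "\<And>j. j \<in> V \<Longrightarrow> (\<Sum>i\<in>S. s i * (if j \<in> X i then 1 else 0)) \<le> c j"
      using X unfolding FP_def feasible_placement_def by auto
    have "lp_feasible S V U s c req T x' y'"
      unfolding lp_feasible_def
    proof (intro conjI ballI)
      fix k assume k: "k \<in> U"
      show "0 \<le> y' k" "y' k \<le> 1" unfolding y'_def by auto
      have fT: "finite (T k)" using users k fV finite_subset by blast
      show "y' k \<le> (\<Sum>j\<in>T k. x' (req k) j)"
      proof (cases "T k \<inter> X (req k) \<noteq> {}")
        case True
        then obtain j where j: "j \<in> T k" "j \<in> X (req k)" by blast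
        have "x' (req k) j \<le> (\<Sum>j\<in>T k. x' (req k) j)"
          using fT j by (intro member_le_sum) (auto simp: x'_def)
        then show ?thesis using True j unfolding y'_def x'_def by simp
      next
        case False
        then show ?thesis unfolding y'_def x'_def by (simp add: sum_nonneg)
      qed
    next
      fix j assume j: "j \<in> V"
      show "(\<Sum>i\<in>S. x' i j * s i) \<le> c j" using feas(2)[OF j] unfolding x'_def by (simp add: mult.commute)
    next
      fix i j assume i: "i \<in> S" and j: "j \<in> V"
      show "0 \<le> x' i j" "x' i j \<le> 1" unfolding x'_def by auto
      show "s i > c j \<longrightarrow> x' i j = 0"
      proof
        assume sc: "s i > c j"
        show "x' i j = 0"
        proof (rule ccontr)
          assume "x' i j \<noteq> 0"
          then have jX: "j \<in> X i" unfolding x'_def by (auto split: if_splits)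
          have "s i * (if j \<in> X i then 1 else 0) \<le> (\<Sum>i\<in>S. s i * (if j \<in> X i then 1 else 0))"
            using fS i spos by (intro member_le_sum) (auto simp: less_imp_le)
          then show False using feas(2)[OF j] jX sc by simp
        qed
      qed
    qed
    then have "(\<Sum>k\<in>U. y' k * w k) \<le> (\<Sum>k\<in>U. y k * w k)" using opt unfolding lp_optimal_def by blast
    moreover have "total_reward U req T w X = (\<Sum>k\<in>U. y' k * w k)"
      unfolding total_reward_def y'_def by (simp add: mult.commute)
    ultimately show ?thesis by simp
  qed
  show ?thesis unfolding opt_reward_def FP_def[symmetric]
    by (rule Max.boundedI[OF fin]) (use ne bound in auto)
qed

theorem theorem13:
  fixes S :: "'i set" and V :: "'j set" and U :: "'k set"
    and s :: "'i \<Rightarrow> real" and c :: "'j \<Rightarrow> real"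
    and req :: "'k \<Rightarrow> 'i" and T :: "'k \<Rightarrow> 'j set" and w :: "'k \<Rightarrow> real"
    and x :: "'i \<Rightarrow> 'j \<Rightarrow> real" and y :: "'k \<Rightarrow> real"
    and js :: "'j list" and lam :: "'j \<Rightarrow> nat" and sl :: "'j slot list" and psi :: "'j slot \<Rightarrow> 'i"
  assumes "finite S" and "finite V" and "finite U"
    and "\<forall>i\<in>S. s i > 0" and "\<forall>j\<in>V. c j > 0"
    and "\<forall>k\<in>U. req k \<in> S \<and> T k \<subseteq> V \<and> w k > 0"
    and "lp_optimal S V U s c req T w x y"
    and "sa2_run S V U s c req T w x js lam sl psi"
  shows "total_reward U req T w (sa2_output S V s c x lam psi)
           \<ge> (1 - exp (-1)) * opt_reward S V U s c req T w / 4"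
proof -
  interpret spsc S V U s c req T w x y
    using assms unfolding lp_optimal_def by unfold_locales auto
  have c0: "0 \<le> (1 - exp (-1::real)) / 4" by simp
  have "(1 - exp (-1)) * opt_reward S V U s c req T w / 4 = (1 - exp (-1)) / 4 * opt_reward S V U s c req T w"
    by simp
  also have "\<dots> \<le> (1 - exp (-1)) / 4 * (\<Sum>k\<in>U. y k * w k)"
    using opt_le_lp[OF assms(1-7)] c0 by (intro mult_left_mono) auto
  also have "\<dots> \<le> Econs S V U s c req T w x (\<lambda>_. None)" by (rule Econs_lower)
  also have "\<dots> \<le> total_reward U req T w (sa2_output S V s c x lam psi)" by (rule sa2_chain[OF assms(8)])
  finally show ?thesis .
qed


end
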